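(* There is a constant $c$ and a choice of the parameter $G=\Theta(\log(1/\beta))$ such that for every $\beta\in(0,1)$, every $\varepsilon>0$, all positive integers $m\le n$ (with $G$ dividing $n$), every even $d$, and every attacker $M$: with probability at least $1-\beta$, \[ \mathrm{Manip}_{m,n}(\mathtt{RAPTOR}_{n,G,\varepsilon},\mathbf U,M)=\text{``Uniform''}, \] and for every distribution $\mathbf P$ on $[d]$ with $\|\mathbf P-\mathbf U\|_1\ge c\cdot\frac{e^\varepsilon+1}{e^\varepsilon-1}\left(\sqrt{\frac{dG}{n}\ln\frac G\beta}+\frac{mG\sqrt d}{n}\right)$, with probability at least $1-\beta$, \[ \mathrm{Manip}_{m,n}(\mathtt{RAPTOR}_{n,G,\varepsilon},\mathbf P,M)=\text{``Not uniform''}. \]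
   Context: $\mathbf U$ is the uniform distribution on $[d]$; $\|\mathbf P-\mathbf U\|_1=\sum_{j\in[d]}|\mathbf P(j)-\mathbf U(j)|$. Randomized response: for $b\in\{\pm1\}$, $R^{RR}_\varepsilon(b)$ outputs $b\cdot\frac{e^\varepsilon+1}{e^\varepsilon-1}$ with probability $\frac{e^\varepsilon}{e^\varepsilon+1}$ and $-b\cdot\frac{e^\varepsilon+1}{e^\varepsilon-1}$ otherwise. Protocol $\mathtt{RAPTOR}_{n,G,\varepsilon}$ (with parameters $m,\beta$ known to the aggregator): public randomness consists of independent uniformly random subsets $S_1,\dots,S_G\subset[d]$ of size $d/2$. Users are split into $G$ contiguous groups; group $g$ consists of users $i$ with $1+(g-1)n/G\le i\le gn/G$. A user $i$ in group $g$ with data $x_i\in[d]$ sets $x_i'=+1$ if $x_i\in S_g$ and $x_i'=-1$ otherwise, and sends $y_i\sim R^{RR}_\varepsilon(x_i')$. The aggregator sets $\alpha_G=\frac{e^\varepsilon+1}{e^\varepsilon-1}\left(\sqrt{\frac{6G}{n}\ln\frac{4G}{\beta}}+\frac{2mG}{n}\right)$, computes $\tilde p(S_g)=\frac Gn\sum_{i\text{ in group }g}y_i$ for each $g$, and outputs ``Not uniform'' if $|\tilde p(S_g)|>2\alpha_G$ for some $g$, and ``Uniform'' otherwise. Manipulation game $\mathrm{Manip}_{m,n}(\Pi,\mathbf P,M)$: the data $x_1,\dots,x_n$ are drawn i.i.d. from $\mathbf P$; the public randomness $S$ is sampled; the attacker $M$ chooses a set $C\subseteq[n]$ with $|C|=m$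 and messages $y_i\in\{\pm\frac{e^\varepsilon+1}{e^\varepsilon-1}\}$ for $i\in C$ (possibly depending on the data, $S$, and its own randomness); each $i\notin C$ independently sends its honest message; the output is the aggregator's output on $(y_1,\dots,y_n)$ and $S$. *)

theory Defs
  imports "HOL-Probability.Probability" "HOL-Library.Landau_Symbols"
begin

text \<open>Users are indexed 0..n-1, data values lie in {0..<d} (standing for [d]),
  groups are indexed 0..G-1.\<close>

datatype verdict = Uniform | NotUniform

definition rr_scale :: "real \<Rightarrow> real" where
  "rr_scale \<epsilon> = (exp \<epsilon> + 1) / (exp \<epsilon> - 1)"

definition RR :: "real \<Rightarrow> real \<Rightarrow> real pmf" where
  "RR \<epsilon> b = map_pmf (\<lambda>keep. if keep then b * rr_scale \<epsilon> else - b * rr_scale \<epsilon>)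
                     (bernoulli_pmf (exp \<epsilon> / (exp \<epsilon> + 1)))"

definition uniform_dist :: "nat \<Rightarrow> nat pmf" where
  "uniform_dist d = pmf_of_set {..<d}"

definition l1_to_uniform :: "nat \<Rightarrow> nat pmf \<Rightarrow> real" where
  "l1_to_uniform d P = (\<Sum>j<d. \<bar>pmf P j - pmf (uniform_dist d) j\<bar>)"

definition group_users :: "nat \<Rightarrow> nat \<Rightarrow> nat \<Rightarrow> nat set" where
  "group_users n G g = {g * (n div G) ..< Suc g * (n div G)}"

definition group_of :: "nat \<Rightarrow> nat \<Rightarrow> nat \<Rightarrow> nat" where
  "group_of n G i = i div (n div G)"

definition public_rand :: "nat \<Rightarrow> nat \<Rightarrow> (nat \<Rightarrow> nat set) pmf" where
  "public_rand d G = Pi_pmf {..<G} {} (\<lambda>_. pmf_of_set {A. A \<subseteq> {..<d} \<and> card A = d div 2})"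

definition raptor_client :: "nat \<Rightarrow> nat \<Rightarrow> real \<Rightarrow> (nat \<Rightarrow> nat set) \<Rightarrow> nat \<Rightarrow> nat \<Rightarrow> real pmf" where
  "raptor_client n G \<epsilon> S i x = RR \<epsilon> (if x \<in> S (group_of n G i) then 1 else -1)"

definition raptor_alpha :: "nat \<Rightarrow> nat \<Rightarrow> real \<Rightarrow> nat \<Rightarrow> real \<Rightarrow> real" where
  "raptor_alpha n G \<epsilon> m \<beta> = rr_scale \<epsilon> *
     (sqrt (6 * real G / real n * ln (4 * real G / \<beta>)) + 2 * real m * real G / real n)"

definition raptor_aggregate :: "nat \<Rightarrow> nat \<Rightarrow> real \<Rightarrow> nat \<Rightarrow> real \<Rightarrow> (nat \<Rightarrow> real) \<Rightarrow> verdict" where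
  "raptor_aggregate n G \<epsilon> m \<beta> y =
     (if \<exists>g<G. \<bar>real G / real n * (\<Sum>i\<in>group_users n G g. y i)\<bar> > 2 * raptor_alpha n G \<epsilon> m \<beta>
      then NotUniform else Uniform)"

text \<open>An attacker maps (data, public randomness) to a distribution (its own randomness)
  over a corrupted set C and messages for the corrupted users.\<close>
type_synonym attacker = "(nat \<Rightarrow> nat) \<Rightarrow> (nat \<Rightarrow> nat set) \<Rightarrow> (nat set \<times> (nat \<Rightarrow> real)) pmf"

definition valid_attacker :: "nat \<Rightarrow> nat \<Rightarrow> real \<Rightarrow> attacker \<Rightarrow> bool" where
  "valid_attacker n m \<epsilon> M \<longleftrightarrow>
     (\<forall>x S C y. (C, y) \<in> set_pmf (M x S) \<longrightarrow>
        C \<subseteq> {..<n} \<and> card C = m \<and> (\<forall>i\<in>C. y i \<in> {rr_scale \<epsilon>, - rr_scale \<epsilon>}))"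

definition manip :: "nat \<Rightarrow> nat \<Rightarrow> nat \<Rightarrow> real \<Rightarrow> real \<Rightarrow> nat \<Rightarrow> nat pmf \<Rightarrow> attacker \<Rightarrow> verdict pmf" where
  "manip m n G \<epsilon> \<beta> d P M =
     bind_pmf (Pi_pmf {..<n} 0 (\<lambda>_. P)) (\<lambda>x.
     bind_pmf (public_rand d G) (\<lambda>S.
     bind_pmf (M x S) (\<lambda>(C, ya).
     bind_pmf (Pi_pmf {..<n} 0 (\<lambda>i. raptor_client n G \<epsilon> S i (x i))) (\<lambda>yh.
     return_pmf (raptor_aggregate n G \<epsilon> m \<beta> (\<lambda>i. if i \<in> C then ya i else yh i))))))"

end

theory Submission
  imports Defs
begin


definition sgs :: "nat set \<Rightarrow> nat \<Rightarrow> real" where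
  "sgs A j = (if j \<in> A then 1 else -1)"
definition halfsets :: "nat \<Rightarrow> nat set set" where
  "halfsets d = {A. A \<subseteq> {..<d} \<and> card A = d div 2}"
definition sw :: "nat \<Rightarrow> nat \<Rightarrow> nat \<Rightarrow> nat" where
  "sw x y z = (if z = x then y else if z = y then x else z)"

lemma finite_halfsets: "finite (halfsets d)"
proof -
  have "halfsets d \<subseteq> Pow {..<d}" by (auto simp: halfsets_def)
  thus ?thesis by (rule finite_subset) simp
qed

lemma halfsets_ne: "{..<d div 2} \<in> halfsets d"
  by (auto simp: halfsets_def)

lemma card_halfsets_pos: "card (halfsets d) > 0"
  using finite_halfsets halfsets_ne by (metis card_gt_0_iff empty_iff)

lemma sgs_sq [simp]: "sgs A j * sgs A j = 1"
  by (simp add: sgs_def)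

lemma sum_sgs_zero:
  assumes "even d" "A \<in> halfsets d"
  shows "(\<Sum>j<d. sgs A j) = 0"
proof -
  have A: "A \<subseteq> {..<d}" "card A = d div 2" using assms by (auto simp: halfsets_def)
  have fA: "finite A" using A finite_subset by blast
  have "(\<Sum>j<d. sgs A j) = (\<Sum>j\<in>A. sgs A j) + (\<Sum>j\<in>{..<d} - A. sgs A j)"
    using A(1) by (metis add.commute finite_lessThan sum.subset_diff)
  also have "(\<Sum>j\<in>A. sgs A j) = real (card A)" by (simp add: sgs_def)
  also have "(\<Sum>j\<in>{..<d} - A. sgs A j) = - real (card ({..<d} - A))" by (simp add: sgs_def)
  also have "card ({..<d} - A) = d - card A" using A fA by (simp add: card_Diff_subset)
  finally show ?thesis using A assms(1) by auto
qed

lemma sw_sw [simp]: "sw x y (sw x y z) = z"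
  by (simp add: sw_def)

lemma sw_lt: "x < d \<Longrightarrow> y < d \<Longrightarrow> z < d \<Longrightarrow> sw x y z < d"
  by (simp add: sw_def)

lemma inj_sw: "inj (sw x y)"
  by (metis injI sw_sw)

lemma sw_image_halfsets:
  assumes "x < d" "y < d" "A \<in> halfsets d"
  shows "sw x y ` A \<in> halfsets d"
proof -
  have "sw x y ` A \<subseteq> {..<d}" using assms sw_lt by (auto simp: halfsets_def)
  moreover have "card (sw x y ` A) = card A"
    by (rule card_image) (meson inj_sw inj_on_subset subset_UNIV)
  ultimately show ?thesis using assms by (auto simp: halfsets_def)
qed

lemma sw_image_image [simp]: "sw x y ` sw x y ` A = A"
  by (simp add: image_image)

lemma sum_halfsets_sw:
  assumes "x < d" "y < d"
  shows "(\<Sum>A\<in>halfsets d. f A) = (\<Sum>A\<in>halfsets d. f (sw x y ` A))"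
  by (rule sum.reindex_bij_witness[where i="\<lambda>A. sw x y ` A" and j="\<lambda>A. sw x y ` A"])
     (auto simp: sw_image_halfsets assms)

lemma sgs_sw: "sgs (sw x y ` A) j = sgs A (sw x y j)"
proof -
  have "j \<in> sw x y ` A \<longleftrightarrow> sw x y j \<in> A"
    by (metis image_iff sw_sw)
  thus ?thesis by (simp add: sgs_def)
qed

lemma E2:
  assumes "even d" "a < d" "b < d" "a \<noteq> b"
  shows "(\<Sum>A\<in>halfsets d. sgs A a * sgs A b) = - real (card (halfsets d)) / (real d - 1)"
proof -
  define T where "T j = (\<Sum>A\<in>halfsets d. sgs A a * sgs A j)" for j
  have Tj: "T j = T b" if "j < d" "j \<noteq> a" for j
  proof -
    have "T j = (\<Sum>A\<in>halfsets d. sgs (sw j b ` A) a * sgs (sw j b ` A) j)"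
      unfolding T_def using sum_halfsets_sw[OF that(1) assms(3)] by blast
    also have "\<dots> = T b" unfolding T_def sgs_sw using that assms by (simp add: sw_def)
    finally show ?thesis .
  qed
  have "(\<Sum>j<d. T j) = (\<Sum>A\<in>halfsets d. sgs A a * (\<Sum>j<d. sgs A j))"
    unfolding T_def by (simp add: sum_distrib_left sum.swap[of _ "{..<d}"])
  also have "\<dots> = 0" using sum_sgs_zero[OF assms(1)] by simp
  finally have z: "(\<Sum>j<d. T j) = 0" .
  have "(\<Sum>j<d. T j) = T a + (\<Sum>j\<in>{..<d} - {a}. T j)"
    using assms(2) by (simp add: sum.remove)
  also have "(\<Sum>j\<in>{..<d} - {a}. T j) = (\<Sum>j\<in>{..<d} - {a}. T b)"
    by (intro sum.cong) (auto intro: Tj)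
  also have "\<dots> = (real d - 1) * T b" using assms(2) by simp
  also have "T a = real (card (halfsets d))" unfolding T_def by simp
  finally have "real (card (halfsets d)) + (real d - 1) * T b = 0" using z by simp
  moreover have "real d - 1 > 0" using assms by linarith
  ultimately show ?thesis unfolding T_def by (simp add: field_simps)
qed

lemma E4:
  assumes "even d" "a < d" "b < d" "c < d" "e < d" "distinct [a,b,c,e]"
  shows "(\<Sum>A\<in>halfsets d. sgs A a * sgs A b * sgs A c * sgs A e)
       = 3 * real (card (halfsets d)) / ((real d - 1) * (real d - 3))"
proof -
  define N where "N = real (card (halfsets d))"
  define T where "T j = (\<Sum>A\<in>halfsets d. sgs A a * sgs A b * sgs A c * sgs A j)" for j
  have Tj: "T j = T e" if "j < d" "j \<notin> {a,b,c}" for j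
  proof -
    have "T j = (\<Sum>A\<in>halfsets d. sgs (sw j e ` A) a * sgs (sw j e ` A) b * sgs (sw j e ` A) c * sgs (sw j e ` A) j)"
      unfolding T_def using sum_halfsets_sw[OF that(1) assms(5)] by blast
    also have "\<dots> = T e" unfolding T_def sgs_sw using that assms by (simp add: sw_def)
    finally show ?thesis .
  qed
  have "(\<Sum>j<d. T j) = (\<Sum>A\<in>halfsets d. sgs A a * sgs A b * sgs A c * (\<Sum>j<d. sgs A j))"
    unfolding T_def by (simp add: sum_distrib_left sum.swap[of _ "{..<d}"])
  also have "\<dots> = 0" using sum_sgs_zero[OF assms(1)] by simp
  finally have z: "(\<Sum>j<d. T j) = 0" .
  have sub: "{a,b,c} \<subseteq> {..<d}" using assms by auto
  have "(\<Sum>j<d. T j) = (\<Sum>j\<in>{a,b,c}. T j) + (\<Sum>j\<in>{..<d} - {a,b,c}. T j)"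
    using sub by (metis add.commute finite_lessThan sum.subset_diff)
  also have "(\<Sum>j\<in>{..<d} - {a,b,c}. T j) = (\<Sum>j\<in>{..<d} - {a,b,c}. T e)"
    by (intro sum.cong) (auto intro: Tj)
  also have "\<dots> = (real d - 3) * T e"
  proof -
    have "card ({..<d} - {a,b,c}) = d - 3" using sub assms(6) by (simp add: card_Diff_subset)
    moreover have "d \<ge> 3" using sub assms(6) card_mono[OF _ sub] by fastforce
    ultimately show ?thesis by (simp add: of_nat_diff)
  qed
  also have "(\<Sum>j\<in>{a,b,c}. T j) = T a + T b + T c" using assms(6) by simp
  also have "T a = - N / (real d - 1)"
  proof -
    have "T a = (\<Sum>A\<in>halfsets d. sgs A b * sgs A c)" unfolding T_def
      by (intro sum.cong refl) (metis mult.commute mult.left_commute mult_1 sgs_sq)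
    thus ?thesis using E2[of d b c] assms unfolding N_def by simp
  qed
  also have "T b = - N / (real d - 1)"
  proof -
    have "T b = (\<Sum>A\<in>halfsets d. sgs A a * sgs A c)" unfolding T_def
      by (intro sum.cong refl) (metis mult.commute mult.left_commute mult_1 sgs_sq)
    thus ?thesis using E2[of d a c] assms unfolding N_def by simp
  qed
  also have "T c = - N / (real d - 1)"
  proof -
    have "T c = (\<Sum>A\<in>halfsets d. sgs A a * sgs A b)" unfolding T_def
      by (intro sum.cong refl) (metis mult.commute mult.left_commute mult_1 sgs_sq)
    thus ?thesis using E2[of d a b] assms unfolding N_def by simp
  qed
  finally have eq: "- 3 * N / (real d - 1) + (real d - 3) * T e = 0" using z by simp
  have "card {a,b,c,e} \<le> card {..<d}" using assms by (intro card_mono) auto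
  hence "real d > 3" using assms(6) by simp
  hence "real d - 1 > 0" "real d - 3 > 0" by auto
  have gen: "t = 3 * N / (y * z)" if "y > 0" "z > 0" "- 3 * N / y + z * t = 0" for y z t :: real
    using that by (simp add: field_simps)
  from gen[OF \<open>real d - 1 > 0\<close> \<open>real d - 3 > 0\<close> eq] show ?thesis unfolding T_def N_def .
qed

lemma sgs_sq2 [simp]: "sgs A j * (sgs A j * x) = x"
  by (simp add: sgs_def)

lemma pair_exact:
  assumes "even d" "x < d" "y < d"
  shows "(\<Sum>A\<in>halfsets d. sgs A x * sgs A y)
       = (if x = y then real (card (halfsets d)) else - real (card (halfsets d)) / (real d - 1))"
  using E2[OF assms] by (cases "x = y") simp_all

definition ind :: "bool \<Rightarrow> real" where "ind P = (if P then 1 else 0)"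

lemma ind_ge0 [simp]: "ind P \<ge> 0" by (simp add: ind_def)

lemma pair_bound:
  assumes "even d" "0 < d" "x < d" "y < d"
  shows "\<bar>\<Sum>A\<in>halfsets d. sgs A x * sgs A y\<bar>
       \<le> real (card (halfsets d)) * ind (x = y) + real (card (halfsets d)) / (real d - 1)"
proof -
  have "real d \<ge> 2" using assms by (metis dvd_imp_le even_of_nat of_nat_numeral le_eq_less_or_eq of_nat_le_iff)
  hence "real d - 1 > 0" by simp
  thus ?thesis using pair_exact[OF assms(1,3,4)] by (auto simp: ind_def)
qed

definition w4 :: "nat \<Rightarrow> nat \<Rightarrow> nat \<Rightarrow> nat \<Rightarrow> nat \<Rightarrow> real" where
  "w4 d a b c e = ind (a = b \<and> c = e) + ind (a = c \<and> b = e) + ind (a = e \<and> b = c)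
     + (1 / (real d - 1)) * (ind (a = b) + ind (a = c) + ind (a = e) + ind (b = c) + ind (b = e) + ind (c = e))
     + 16 / (real d)^2"

lemma tuple_bound:
  assumes "even d" "0 < d" "a < d" "b < d" "c < d" "e < d"
  shows "\<bar>\<Sum>A\<in>halfsets d. sgs A a * sgs A b * sgs A c * sgs A e\<bar>
       \<le> real (card (halfsets d)) * w4 d a b c e"
proof -
  define N where "N = real (card (halfsets d))"
  define K where "K = 1 / (real d - 1)"
  have d2: "real d \<ge> 2" using assms by (metis dvd_imp_le even_of_nat of_nat_numeral le_eq_less_or_eq of_nat_le_iff)
  hence K0: "K > 0" by (simp add: K_def)
  have N0: "N \<ge> 0" by (simp add: N_def)
  have nn: "0 \<le> 16 / (real d)^2" by simp
  have pb: "\<And>x y. x < d \<Longrightarrow> y < d \<Longrightarrow> \<bar>\<Sum>A\<in>halfsets d. sgs A x * sgs A y\<bar> \<le> N * ind (x = y) + N * K"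
    using pair_bound[OF assms(1,2)] by (simp add: N_def K_def)
  have W: "w4 d a b c e = ind (a = b \<and> c = e) + ind (a = c \<and> b = e) + ind (a = e \<and> b = c)
     + K * ind (a = b) + K * ind (a = c) + K * ind (a = e) + K * ind (b = c) + K * ind (b = e) + K * ind (c = e)
     + 16 / (real d)^2" unfolding w4_def K_def by (simp add: algebra_simps)
  have i0: "\<And>P. 0 \<le> N * ind P" "\<And>P. 0 \<le> N * (K * ind P)" using N0 K0 by simp_all
  have NW: "N * w4 d a b c e = N * ind (a = b \<and> c = e) + N * ind (a = c \<and> b = e) + N * ind (a = e \<and> b = c)
     + N * (K * ind (a = b)) + N * (K * ind (a = c)) + N * (K * ind (a = e)) + N * (K * ind (b = c))
     + N * (K * ind (b = e)) + N * (K * ind (c = e)) + N * (16 / (real d)^2)"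
    unfolding W by (simp add: algebra_simps)
  have n16: "0 \<le> N * (16 / (real d)^2)" using N0 by simp
  note nnall = n16 i0(1)[of "a = b \<and> c = e"] i0(1)[of "a = c \<and> b = e"] i0(1)[of "a = e \<and> b = c"]
    i0(2)[of "a = b"] i0(2)[of "a = c"] i0(2)[of "a = e"] i0(2)[of "b = c"] i0(2)[of "b = e"] i0(2)[of "c = e"]
  show ?thesis
  proof (cases "a = b")
    case True
    have "(\<Sum>A\<in>halfsets d. sgs A a * sgs A b * sgs A c * sgs A e) = (\<Sum>A\<in>halfsets d. sgs A c * sgs A e)"
      using True by (simp add: mult.assoc)
    moreover have "N * ind (c = e) = N * ind (a = b \<and> c = e)" "N * K = N * (K * ind (a = b))"
      using True by (simp_all add: ind_def)
    ultimately show ?thesis using pb[OF assms(5,6)] nnall unfolding N_def[symmetric] NW by linarith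
  next
    case ab: False
    show ?thesis
    proof (cases "a = c")
      case True
      have "(\<Sum>A\<in>halfsets d. sgs A a * sgs A b * sgs A c * sgs A e) = (\<Sum>A\<in>halfsets d. sgs A b * sgs A e)"
        using True by (simp add: mult_ac)
      moreover have "N * ind (b = e) = N * ind (a = c \<and> b = e)" "N * K = N * (K * ind (a = c))"
        using True by (simp_all add: ind_def)
      ultimately show ?thesis using pb[OF assms(4,6)] nnall unfolding N_def[symmetric] NW by linarith
    next
      case ac: False
      show ?thesis
      proof (cases "a = e")
        case True
        have "(\<Sum>A\<in>halfsets d. sgs A a * sgs A b * sgs A c * sgs A e) = (\<Sum>A\<in>halfsets d. sgs A b * sgs A c)"
          using True by (simp add: mult_ac)
        moreover have "N * ind (b = c) = N * ind (a = e \<and> b = c)" "N * K = N * (K * ind (a = e))"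
          using True by (simp_all add: ind_def)
        ultimately show ?thesis using pb[OF assms(4,5)] nnall unfolding N_def[symmetric] NW by linarith
      next
        case ae: False
        show ?thesis
        proof (cases "b = c")
          case True
          have "(\<Sum>A\<in>halfsets d. sgs A a * sgs A b * sgs A c * sgs A e) = (\<Sum>A\<in>halfsets d. sgs A a * sgs A e)"
            using True by (simp add: mult_ac)
          moreover have "N * ind (a = e) = N * ind (a = e \<and> b = c)" "N * K = N * (K * ind (b = c))"
            using True by (simp_all add: ind_def)
          ultimately show ?thesis using pb[OF assms(3,6)] nnall unfolding N_def[symmetric] NW by linarith
        next
          case bc: False
          show ?thesis
          proof (cases "b = e")
            case True
            have "(\<Sum>A\<in>halfsets d. sgs A a * sgs A b * sgs A c * sgs A e) = (\<Sum>A\<in>halfsets d. sgs A a * sgs A c)"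
              using True by (simp add: mult_ac)
            moreover have "N * ind (a = c) = N * ind (a = c \<and> b = e)" "N * K = N * (K * ind (b = e))"
              using True by (simp_all add: ind_def)
            ultimately show ?thesis using pb[OF assms(3,5)] nnall unfolding N_def[symmetric] NW by linarith
          next
            case be: False
            show ?thesis
            proof (cases "c = e")
              case True
              have "(\<Sum>A\<in>halfsets d. sgs A a * sgs A b * sgs A c * sgs A e) = (\<Sum>A\<in>halfsets d. sgs A a * sgs A b)"
                using True by (simp add: mult_ac)
              moreover have "N * ind (a = b) = N * ind (a = b \<and> c = e)" "N * K = N * (K * ind (c = e))"
                using True by (simp_all add: ind_def)
              ultimately show ?thesis using pb[OF assms(3,4)] nnall unfolding N_def[symmetric] NW by linarith
            next
              case ce: False
              have dist: "distinct [a,b,c,e]" using ab ac ae bc be ce by simp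
              have "card {a,b,c,e} \<le> card {..<d}" using assms by (intro card_mono) auto
              hence d4: "real d \<ge> 4" using dist by simp
              have "3 / ((real d - 1) * (real d - 3)) \<le> 16 / (real d)^2"
              proof -
                have p: "(real d - 1) * (real d - 3) > 0" using d4 by simp
                have "3 * (real d)^2 \<le> 16 * ((real d - 1) * (real d - 3))"
                proof -
                  have "(real d - 4) * (13 * real d - 12) \<ge> 0" using d4 by (intro mult_nonneg_nonneg) auto
                  thus ?thesis by (simp add: power2_eq_square algebra_simps)
                qed
                thus ?thesis using p d4 by (simp add: field_simps)
              qed
              hence "3 * N / ((real d - 1) * (real d - 3)) \<le> N * (16 / (real d)^2)"
                using N0 by (metis mult.commute mult_left_mono times_divide_eq_right)
              moreover have "0 \<le> 3 * N / ((real d - 1) * (real d - 3))" using N0 d4 by simp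
              moreover have "\<bar>\<Sum>A\<in>halfsets d. sgs A a * sgs A b * sgs A c * sgs A e\<bar> = 3 * N / ((real d - 1) * (real d - 3))"
                using E4[OF assms(1,3,4,5,6) dist] calculation(2) unfolding N_def by (simp only: abs_of_nonneg)
              ultimately show ?thesis using nnall unfolding N_def[symmetric] NW by linarith
            qed
          qed
        qed
      qed
    qed
  qed
qed

lemma triple: "(\<Sum>a\<in>A. \<Sum>b\<in>B. \<Sum>c\<in>C. f a * g b * h c) = sum f A * sum g B * (sum h C :: real)"
proof -
  have "sum f A * sum g B * sum h C = (\<Sum>a\<in>A. f a * sum g B * sum h C)" by (simp add: sum_distrib_right)
  also have "\<dots> = (\<Sum>a\<in>A. \<Sum>b\<in>B. f a * g b * sum h C)"
  proof -
    have "f a * sum g B * X = (\<Sum>b\<in>B. f a * g b * X)" for a and X :: real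
      by (simp add: sum_distrib_left sum_distrib_right)
    thus ?thesis by simp
  qed
  also have "\<dots> = (\<Sum>a\<in>A. \<Sum>b\<in>B. \<Sum>c\<in>C. f a * g b * h c)" by (simp add: sum_distrib_left)
  finally show ?thesis ..
qed
lemma double: "(\<Sum>a\<in>A. \<Sum>b\<in>B. f a * g b) = sum f A * (sum g B :: real)"
  by (simp add: sum_product)
lemma T_o: "(\<Sum>a<d. \<Sum>b<(d::nat). \<Sum>c<d. u a * (u a * (u b * u c))) = (\<Sum>a<d. u a) ^ 2 * (\<Sum>a<d. u a ^ 2)" for u :: "nat \<Rightarrow> real"
proof -
  have "(\<Sum>a<d. \<Sum>b<(d::nat). \<Sum>c<d. u a * (u a * (u b * u c))) = (\<Sum>a<d. \<Sum>b<(d::nat). \<Sum>c<d. (u a ^ 2) * u b * u c)"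
    by (simp add: power2_eq_square mult_ac)
  thus ?thesis unfolding triple by (simp add: power2_eq_square mult_ac)
qed
lemma T_m: "(\<Sum>a<d. \<Sum>b<(d::nat). \<Sum>c<d. u a * (u b * (u b * u c))) = (\<Sum>a<d. u a) ^ 2 * (\<Sum>a<d. u a ^ 2)" for u :: "nat \<Rightarrow> real"
proof -
  have "(\<Sum>a<d. \<Sum>b<(d::nat). \<Sum>c<d. u a * (u b * (u b * u c))) = (\<Sum>a<d. \<Sum>b<(d::nat). \<Sum>c<d. u a * (u b ^ 2) * u c)"
    by (simp add: power2_eq_square mult_ac)
  thus ?thesis unfolding triple by (simp add: power2_eq_square mult_ac)
qed
lemma T_i: "(\<Sum>a<d. \<Sum>b<(d::nat). \<Sum>c<d. u a * (u b * (u c * u c))) = (\<Sum>a<d. u a) ^ 2 * (\<Sum>a<d. u a ^ 2)" for u :: "nat \<Rightarrow> real"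
proof -
  have "(\<Sum>a<d. \<Sum>b<(d::nat). \<Sum>c<d. u a * (u b * (u c * u c))) = (\<Sum>a<d. \<Sum>b<(d::nat). \<Sum>c<d. u a * u b * (u c ^ 2))"
    by (simp add: power2_eq_square mult_ac)
  thus ?thesis unfolding triple by (simp add: power2_eq_square mult_ac)
qed
lemma T_pp: "(\<Sum>a<d. \<Sum>b<(d::nat). u a * (u a * (u b * u b))) = (\<Sum>a<d. u a ^ 2) ^ 2" for u :: "nat \<Rightarrow> real"
proof -
  have "(\<Sum>a<d. \<Sum>b<(d::nat). u a * (u a * (u b * u b))) = (\<Sum>a<d. \<Sum>b<(d::nat). u a ^ 2 * u b ^ 2)"
    by (simp add: power2_eq_square mult_ac)
  thus ?thesis unfolding double by (simp add: power2_eq_square)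
qed
lemma T_pp2: "(\<Sum>a<d. \<Sum>b<(d::nat). u a * (u b * (u a * u b))) = (\<Sum>a<d. u a ^ 2) ^ 2" for u :: "nat \<Rightarrow> real"
  using T_pp[of u d] by (simp add: mult_ac)

lemmas Ts = T_o T_m T_i T_pp T_pp2
lemma mif2: "x * (if P then y else 0) = (if P then x * y else (0::real))" by simp
lemma sum_if_out: "(\<Sum>x\<in>A. if P then f x else (0::real)) = (if P then sum f A else 0)" by simp
lemma ifconj: "(if P \<and> Q then x else (0::real)) = (if P then (if Q then x else 0) else 0)" by simp

lemma Q_ab: "(\<Sum>a<d. \<Sum>b<(d::nat). \<Sum>c<d. \<Sum>e<d. u a * u b * u c * u e * ind (a = b)) = (\<Sum>a<d. u a) ^ 2 * (\<Sum>a<d. u a ^ 2)"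
  for u :: "nat \<Rightarrow> real"
  unfolding ind_def
  apply (simp add: mif2 ifconj sum_if_out sum.delta sum.delta' cong: if_cong)
  by (simp add: Ts mult_ac)

lemma Q_ac: "(\<Sum>a<d. \<Sum>b<(d::nat). \<Sum>c<d. \<Sum>e<d. u a * u b * u c * u e * ind (a = c)) = (\<Sum>a<d. u a) ^ 2 * (\<Sum>a<d. u a ^ 2)"
  for u :: "nat \<Rightarrow> real"
  unfolding ind_def
  apply (simp add: mif2 ifconj sum_if_out sum.delta sum.delta' cong: if_cong)
  by (simp add: Ts mult_ac)

lemma Q_ae: "(\<Sum>a<d. \<Sum>b<(d::nat). \<Sum>c<d. \<Sum>e<d. u a * u b * u c * u e * ind (a = e)) = (\<Sum>a<d. u a) ^ 2 * (\<Sum>a<d. u a ^ 2)"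
  for u :: "nat \<Rightarrow> real"
  unfolding ind_def
  apply (simp add: mif2 ifconj sum_if_out sum.delta sum.delta' cong: if_cong)
  by (simp add: Ts mult_ac)

lemma Q_bc: "(\<Sum>a<d. \<Sum>b<(d::nat). \<Sum>c<d. \<Sum>e<d. u a * u b * u c * u e * ind (b = c)) = (\<Sum>a<d. u a) ^ 2 * (\<Sum>a<d. u a ^ 2)"
  for u :: "nat \<Rightarrow> real"
  unfolding ind_def
  apply (simp add: mif2 ifconj sum_if_out sum.delta sum.delta' cong: if_cong)
  by (simp add: Ts mult_ac)

lemma Q_be: "(\<Sum>a<d. \<Sum>b<(d::nat). \<Sum>c<d. \<Sum>e<d. u a * u b * u c * u e * ind (b = e)) = (\<Sum>a<d. u a) ^ 2 * (\<Sum>a<d. u a ^ 2)"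
  for u :: "nat \<Rightarrow> real"
  unfolding ind_def
  apply (simp add: mif2 ifconj sum_if_out sum.delta sum.delta' cong: if_cong)
  by (simp add: Ts mult_ac)

lemma Q_ce: "(\<Sum>a<d. \<Sum>b<(d::nat). \<Sum>c<d. \<Sum>e<d. u a * u b * u c * u e * ind (c = e)) = (\<Sum>a<d. u a) ^ 2 * (\<Sum>a<d. u a ^ 2)"
  for u :: "nat \<Rightarrow> real"
  unfolding ind_def
  apply (simp add: mif2 ifconj sum_if_out sum.delta sum.delta' cong: if_cong)
  by (simp add: Ts mult_ac)

lemma Q_abce: "(\<Sum>a<d. \<Sum>b<(d::nat). \<Sum>c<d. \<Sum>e<d. u a * u b * u c * u e * ind (a = b \<and> c = e)) = (\<Sum>a<d. u a ^ 2) ^ 2"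
  for u :: "nat \<Rightarrow> real"
  unfolding ind_def
  apply (simp add: mif2 ifconj sum_if_out sum.delta sum.delta' cong: if_cong)
  by (simp add: Ts mult_ac)

lemma Q_acbe: "(\<Sum>a<d. \<Sum>b<(d::nat). \<Sum>c<d. \<Sum>e<d. u a * u b * u c * u e * ind (a = c \<and> b = e)) = (\<Sum>a<d. u a ^ 2) ^ 2"
  for u :: "nat \<Rightarrow> real"
  unfolding ind_def
  apply (simp add: mif2 ifconj sum_if_out sum.delta sum.delta' cong: if_cong)
  by (simp add: Ts mult_ac)

lemma Q_aebc: "(\<Sum>a<d. \<Sum>b<(d::nat). \<Sum>c<d. \<Sum>e<d. u a * u b * u c * u e * ind (a = e \<and> b = c)) = (\<Sum>a<d. u a ^ 2) ^ 2"
  for u :: "nat \<Rightarrow> real"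
  unfolding ind_def
  apply (simp add: mif2 ifconj sum_if_out sum.delta sum.delta' cong: if_cong)
  by (simp add: Ts mult_ac)

lemma Q_0: "(\<Sum>a<d. \<Sum>b<(d::nat). \<Sum>c<d. \<Sum>e<d. u a * u b * u c * u e) = (\<Sum>a<d. u a) ^ 4"
  for u :: "nat \<Rightarrow> real"
  by (simp add: eval_nat_numeral sum_distrib_left sum_distrib_right mult_ac)

lemma sum_swap5:
  "(\<Sum>A\<in>X. \<Sum>a<d. \<Sum>b<(d::nat). \<Sum>c<d. \<Sum>e<d. F A a b c e) =
   (\<Sum>a<d. \<Sum>b<d. \<Sum>c<d. \<Sum>e<d. \<Sum>A\<in>X. (F A a b c e :: real))"
  apply (rule trans[OF sum.swap]) apply (rule sum.cong[OF refl]) apply (rule trans[OF sum.swap]) apply (rule sum.cong[OF refl])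
  apply (rule trans[OF sum.swap]) apply (rule sum.cong[OF refl]) apply (rule sum.swap) done

lemma pow4_expand: "(\<Sum>a<(d::nat). f a::real) ^ 4 = (\<Sum>a<d. \<Sum>b<(d::nat). \<Sum>c<d. \<Sum>e<d. f a * f b * f c * f e)"
  by (simp add: eval_nat_numeral sum_distrib_left sum_distrib_right mult_ac)

lemma CS_sum: "(\<Sum>j<d. u j)^2 \<le> real d * (\<Sum>j<d. (u j)^2)" for u :: "nat \<Rightarrow> real"
  using Cauchy_Schwarz_ineq_sum[of "\<lambda>_. 1" u "{..<d}"] by simp


lemma w4_expand:
  fixes u :: "nat \<Rightarrow> real" and d :: nat
  defines "K \<equiv> 1 / (real d - 1)"
  shows "(\<Sum>a<d. \<Sum>b<d. \<Sum>c<d. \<Sum>e<d. (u a * u b * u c * u e) * w4 d a b c e)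
     = (\<Sum>a<d. \<Sum>b<d. \<Sum>c<d. \<Sum>e<d. u a * u b * u c * u e * ind (a = b \<and> c = e))
      + (\<Sum>a<d. \<Sum>b<d. \<Sum>c<d. \<Sum>e<d. u a * u b * u c * u e * ind (a = c \<and> b = e))
      + (\<Sum>a<d. \<Sum>b<d. \<Sum>c<d. \<Sum>e<d. u a * u b * u c * u e * ind (a = e \<and> b = c))
      + K * ((\<Sum>a<d. \<Sum>b<d. \<Sum>c<d. \<Sum>e<d. u a * u b * u c * u e * ind (a = b))
           + (\<Sum>a<d. \<Sum>b<d. \<Sum>c<d. \<Sum>e<d. u a * u b * u c * u e * ind (a = c))
           + (\<Sum>a<d. \<Sum>b<d. \<Sum>c<d. \<Sum>e<d. u a * u b * u c * u e * ind (a = e))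
           + (\<Sum>a<d. \<Sum>b<d. \<Sum>c<d. \<Sum>e<d. u a * u b * u c * u e * ind (b = c))
           + (\<Sum>a<d. \<Sum>b<d. \<Sum>c<d. \<Sum>e<d. u a * u b * u c * u e * ind (b = e))
           + (\<Sum>a<d. \<Sum>b<d. \<Sum>c<d. \<Sum>e<d. u a * u b * u c * u e * ind (c = e)))
      + 16 / (real d)^2 * (\<Sum>a<d. \<Sum>b<d. \<Sum>c<d. \<Sum>e<d. u a * u b * u c * u e)"
proof -
  define P where "P a b c e = u a * u b * u c * u e" for a b c e
  have pt: "P a b c e * w4 d a b c e = P a b c e * ind (a = b \<and> c = e) + P a b c e * ind (a = c \<and> b = e)
     + P a b c e * ind (a = e \<and> b = c) + K * (P a b c e * ind (a = b)) + K * (P a b c e * ind (a = c))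
     + K * (P a b c e * ind (a = e)) + K * (P a b c e * ind (b = c)) + K * (P a b c e * ind (b = e))
     + K * (P a b c e * ind (c = e)) + 16 / (real d)^2 * P a b c e" for a b c e
    unfolding w4_def K_def by (simp add: algebra_simps)
  show ?thesis
    unfolding P_def[symmetric] pt
    by (simp only: sum.distrib sum_distrib_left[symmetric] distrib_left)
qed

lemma d_ge2: "even d \<Longrightarrow> 0 < d \<Longrightarrow> real d \<ge> 2"
  by (metis dvd_imp_le even_of_nat of_nat_numeral le_eq_less_or_eq of_nat_le_iff)

lemma fourth_moment:
  assumes "even d" "0 < d"
  shows "(\<Sum>A\<in>halfsets d. (\<Sum>j<d. x j * sgs A j)^4) \<le> 31 * real (card (halfsets d)) * (\<Sum>j<d. (x j)^2)^2"
proof -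
  define N where "N = real (card (halfsets d))"
  define u where "u j = \<bar>x j\<bar>" for j
  define s2 where "s2 = (\<Sum>j<d. (u j)^2)"
  define L where "L = (\<Sum>j<d. u j)"
  define K where "K = 1 / (real d - 1)"
  have d2: "real d \<ge> 2" using d_ge2 assms by blast
  have N0: "N \<ge> 0" by (simp add: N_def)
  have s2x: "(\<Sum>j<d. (x j)^2) = s2" unfolding s2_def u_def by simp
  have "(\<Sum>A\<in>halfsets d. (\<Sum>j<d. x j * sgs A j)^4)
      = (\<Sum>A\<in>halfsets d. \<Sum>a<d. \<Sum>b<d. \<Sum>c<d. \<Sum>e<d. (x a * x b * x c * x e) * (sgs A a * sgs A b * sgs A c * sgs A e))"
    unfolding pow4_expand by (simp add: mult_ac)
  also have "\<dots> = (\<Sum>a<d. \<Sum>b<d. \<Sum>c<d. \<Sum>e<d. (x a * x b * x c * x e) * (\<Sum>A\<in>halfsets d. sgs A a * sgs A b * sgs A c * sgs A e))"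
    by (simp add: sum_swap5 sum_distrib_left)
  also have "\<dots> \<le> (\<Sum>a<d. \<Sum>b<d. \<Sum>c<d. \<Sum>e<d. (u a * u b * u c * u e) * (N * w4 d a b c e))"
  proof (intro sum_mono)
    fix a b c e assume "a \<in> {..<d}" "b \<in> {..<d}" "c \<in> {..<d}" "e \<in> {..<d}"
    hence tb: "\<bar>\<Sum>A\<in>halfsets d. sgs A a * sgs A b * sgs A c * sgs A e\<bar> \<le> N * w4 d a b c e"
      using tuple_bound[OF assms] unfolding N_def by simp
    have "(x a * x b * x c * x e) * (\<Sum>A\<in>halfsets d. sgs A a * sgs A b * sgs A c * sgs A e)
        \<le> \<bar>x a * x b * x c * x e\<bar> * \<bar>\<Sum>A\<in>halfsets d. sgs A a * sgs A b * sgs A c * sgs A e\<bar>"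
      by (simp only: abs_mult[symmetric] abs_ge_self)
    also have "\<dots> \<le> \<bar>x a * x b * x c * x e\<bar> * (N * w4 d a b c e)"
      by (intro mult_left_mono tb) simp
    finally show "(x a * x b * x c * x e) * (\<Sum>A\<in>halfsets d. sgs A a * sgs A b * sgs A c * sgs A e)
        \<le> (u a * u b * u c * u e) * (N * w4 d a b c e)" unfolding u_def by (simp add: abs_mult)
  qed
  also have "\<dots> = N * ((\<Sum>a<d. \<Sum>b<d. \<Sum>c<d. \<Sum>e<d. u a * u b * u c * u e * ind (a = b \<and> c = e))
      + (\<Sum>a<d. \<Sum>b<d. \<Sum>c<d. \<Sum>e<d. u a * u b * u c * u e * ind (a = c \<and> b = e))
      + (\<Sum>a<d. \<Sum>b<d. \<Sum>c<d. \<Sum>e<d. u a * u b * u c * u e * ind (a = e \<and> b = c))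
      + K * ((\<Sum>a<d. \<Sum>b<d. \<Sum>c<d. \<Sum>e<d. u a * u b * u c * u e * ind (a = b))
           + (\<Sum>a<d. \<Sum>b<d. \<Sum>c<d. \<Sum>e<d. u a * u b * u c * u e * ind (a = c))
           + (\<Sum>a<d. \<Sum>b<d. \<Sum>c<d. \<Sum>e<d. u a * u b * u c * u e * ind (a = e))
           + (\<Sum>a<d. \<Sum>b<d. \<Sum>c<d. \<Sum>e<d. u a * u b * u c * u e * ind (b = c))
           + (\<Sum>a<d. \<Sum>b<d. \<Sum>c<d. \<Sum>e<d. u a * u b * u c * u e * ind (b = e))
           + (\<Sum>a<d. \<Sum>b<d. \<Sum>c<d. \<Sum>e<d. u a * u b * u c * u e * ind (c = e)))
      + 16 / (real d)^2 * (\<Sum>a<d. \<Sum>b<d. \<Sum>c<d. \<Sum>e<d. u a * u b * u c * u e))"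
  proof -
    have "(\<Sum>a<d. \<Sum>b<d. \<Sum>c<d. \<Sum>e<d. (u a * u b * u c * u e) * (N * w4 d a b c e))
        = N * (\<Sum>a<d. \<Sum>b<d. \<Sum>c<d. \<Sum>e<d. (u a * u b * u c * u e) * w4 d a b c e)"
      by (simp add: sum_distrib_left mult_ac)
    thus ?thesis unfolding w4_expand K_def .
  qed
  also have "\<dots> = N * (3 * s2^2 + K * (6 * (L^2 * s2)) + 16 / (real d)^2 * L^4)"
    unfolding Q_ab Q_ac Q_ae Q_bc Q_be Q_ce Q_abce Q_acbe Q_aebc Q_0 s2_def[symmetric] L_def[symmetric] by simp
  also have "\<dots> \<le> N * (31 * s2^2)"
  proof (intro mult_left_mono N0)
    have cs: "L^2 \<le> real d * s2" unfolding L_def s2_def by (rule CS_sum)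
    have s20: "s2 \<ge> 0" unfolding s2_def by (simp add: sum_nonneg)
    have "K * (6 * (L^2 * s2)) \<le> K * (6 * (real d * s2 * s2))"
      using cs s20 d2 unfolding K_def by (intro mult_left_mono mult_right_mono) auto
    also have "\<dots> = 6 * (real d / (real d - 1)) * s2^2" unfolding K_def by (simp add: power2_eq_square)
    also have "\<dots> \<le> 6 * 2 * s2^2"
    proof -
      have "real d / (real d - 1) \<le> 2" using d2 by (simp add: field_simps)
      thus ?thesis using s20 by (intro mult_right_mono mult_left_mono) auto
    qed
    finally have t1: "K * (6 * (L^2 * s2)) \<le> 12 * s2^2" by simp
    have "L^4 = (L^2)^2" by simp
    also have "\<dots> \<le> (real d * s2)^2" using cs by (intro power_mono) auto
    finally have "16 / (real d)^2 * L^4 \<le> 16 / (real d)^2 * (real d * s2)^2"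
      by (intro mult_left_mono) auto
    also have "\<dots> = 16 * s2^2" using d2 by (simp add: power_mult_distrib)
    finally have t2: "16 / (real d)^2 * L^4 \<le> 16 * s2^2" .
    show "3 * s2^2 + K * (6 * (L^2 * s2)) + 16 / (real d)^2 * L^4 \<le> 31 * s2^2" using t1 t2 by linarith
  qed
  finally show ?thesis unfolding N_def s2x by (simp add: mult_ac)
qed

lemma second_moment:
  assumes "even d" "0 < d" "(\<Sum>j<d. x j) = 0"
  shows "(\<Sum>A\<in>halfsets d. (\<Sum>j<d. x j * sgs A j)^2) \<ge> real (card (halfsets d)) * (\<Sum>j<d. (x j)^2)"
proof -
  define N where "N = real (card (halfsets d))"
  have d2: "real d \<ge> 2" using d_ge2 assms by blast
  have "(\<Sum>A\<in>halfsets d. (\<Sum>j<d. x j * sgs A j)^2)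
      = (\<Sum>A\<in>halfsets d. \<Sum>a<d. \<Sum>b<d. (x a * x b) * (sgs A a * sgs A b))"
    by (simp add: power2_eq_square sum_product mult_ac)
  also have "\<dots> = (\<Sum>a<d. \<Sum>b<d. (x a * x b) * (\<Sum>A\<in>halfsets d. sgs A a * sgs A b))"
    apply (rule trans[OF sum.swap]) apply (rule sum.cong[OF refl]) apply (rule trans[OF sum.swap])
    by (simp add: sum_distrib_left)
  also have "\<dots> = (\<Sum>a<d. \<Sum>b<d. (x a * x b) * ((N + N / (real d - 1)) * ind (a = b) - N / (real d - 1)))"
    by (intro sum.cong refl) (auto simp: pair_exact[OF assms(1)] ind_def N_def)
  also have "\<dots> = (\<Sum>a<d. \<Sum>b<d. (N + N / (real d - 1)) * (x a * x b * ind (a = b)) - N / (real d - 1) * (x a * x b))"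
    by (intro sum.cong refl) (simp add: algebra_simps)
  also have "\<dots> = (N + N / (real d - 1)) * (\<Sum>a<d. \<Sum>b<d. x a * x b * ind (a = b)) - N / (real d - 1) * (\<Sum>a<d. \<Sum>b<d. x a * x b)"
    by (simp add: sum_subtractf sum_distrib_left)
  also have "(\<Sum>a<d. \<Sum>b<d. x a * x b * ind (a = b)) = (\<Sum>a<d. (x a)^2)"
    unfolding ind_def by (simp add: mif2 sum.delta sum.delta' power2_eq_square cong: if_cong)
  also have "(\<Sum>a<d. \<Sum>b<d. x a * x b) = (\<Sum>a<d. x a)^2"
    by (simp add: power2_eq_square sum_product)
  finally have eq: "(\<Sum>A\<in>halfsets d. (\<Sum>j<d. x j * sgs A j)^2) = (N + N / (real d - 1)) * (\<Sum>a<d. (x a)^2) - N / (real d - 1) * (\<Sum>a<d. x a)^2" .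
  have "N / (real d - 1) * (\<Sum>a<d. (x a)^2) \<ge> 0" using d2 by (simp add: N_def sum_nonneg)
  thus ?thesis unfolding eq N_def[symmetric] using assms(3) by (simp add: algebra_simps)
qed


lemma anticonc:
  assumes "even d" "0 < d" "(\<Sum>j<d. x j) = 0"
  shows "real (card {A \<in> halfsets d. (\<Sum>j<d. x j * sgs A j)^2 \<ge> (\<Sum>j<d. (x j)^2) / 2}) * 124
           \<ge> real (card (halfsets d))"
proof -
  define H where "H = halfsets d"
  define N where "N = real (card H)"
  define s2 where "s2 = (\<Sum>j<d. (x j)^2)"
  define Y where "Y A = (\<Sum>j<d. x j * sgs A j)" for A
  define G where "G = {A \<in> H. (Y A)^2 \<ge> s2 / 2}"
  have fH: "finite H" unfolding H_def by (rule finite_halfsets)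
  have GH: "G \<subseteq> H" unfolding G_def by auto
  have fG: "finite G" using fH GH finite_subset by blast
  have s20: "s2 \<ge> 0" unfolding s2_def by (simp add: sum_nonneg)
  have goal_eq: "{A \<in> halfsets d. (\<Sum>j<d. x j * sgs A j)^2 \<ge> (\<Sum>j<d. (x j)^2) / 2} = G"
    unfolding G_def H_def Y_def s2_def ..
  show ?thesis
  proof (cases "s2 = 0")
    case True
    hence "G = H" unfolding G_def by auto
    thus ?thesis unfolding goal_eq H_def by simp
  next
    case False
    hence s2p: "s2 > 0" using s20 by simp
    define lam where "lam = 62 * s2"
    have lam0: "lam > 0" unfolding lam_def using s2p by simp
    have m2: "N * s2 \<le> (\<Sum>A\<in>H. (Y A)^2)"
      using second_moment[OF assms] unfolding N_def H_def s2_def Y_def by simp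
    have m4: "(\<Sum>A\<in>H. (Y A)^4) \<le> 31 * N * s2^2"
      using fourth_moment[OF assms(1,2), of x] unfolding N_def H_def s2_def Y_def by simp
    have split: "(\<Sum>A\<in>H. (Y A)^2) = (\<Sum>A\<in>G. (Y A)^2) + (\<Sum>A\<in>H - G. (Y A)^2)"
      using GH fH by (metis add.commute sum.subset_diff)
    have bad: "(\<Sum>A\<in>H - G. (Y A)^2) \<le> N * (s2 / 2)"
    proof -
      have "(\<Sum>A\<in>H - G. (Y A)^2) \<le> (\<Sum>A\<in>H - G. s2 / 2)"
        by (intro sum_mono) (auto simp: G_def)
      also have "\<dots> = real (card (H - G)) * (s2 / 2)" by simp
      also have "\<dots> \<le> N * (s2 / 2)" unfolding N_def using s2p fH
        by (intro mult_right_mono) (auto simp: card_mono)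
      finally show ?thesis .
    qed
    have amgm: "z \<le> z^2 / (2 * lam) + lam / 2" for z
    proof -
      have "0 \<le> (z - lam)^2" by simp
      hence "2 * lam * z \<le> z^2 + lam^2" by (simp add: power2_eq_square algebra_simps)
      thus ?thesis using lam0 by (simp add: field_simps power2_eq_square)
    qed
    have good: "(\<Sum>A\<in>G. (Y A)^2) \<le> (\<Sum>A\<in>H. (Y A)^4) / (2 * lam) + real (card G) * (lam / 2)"
    proof -
      have "(\<Sum>A\<in>G. (Y A)^2) \<le> (\<Sum>A\<in>G. ((Y A)^2)^2 / (2 * lam) + lam / 2)"
        by (intro sum_mono amgm)
      also have "\<dots> = (\<Sum>A\<in>G. (Y A)^4) / (2 * lam) + real (card G) * (lam / 2)"
        by (simp add: sum.distrib sum_divide_distrib power_mult[symmetric])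
      also have "(\<Sum>A\<in>G. (Y A)^4) \<le> (\<Sum>A\<in>H. (Y A)^4)"
        using GH fH by (intro sum_mono2) auto
      hence "(\<Sum>A\<in>G. (Y A)^4) / (2 * lam) \<le> (\<Sum>A\<in>H. (Y A)^4) / (2 * lam)"
        using lam0 by (intro divide_right_mono) auto
      finally show ?thesis by simp
    qed
    have "(\<Sum>A\<in>H. (Y A)^4) / (2 * lam) \<le> 31 * N * s2^2 / (2 * lam)"
      using m4 lam0 by (intro divide_right_mono) auto
    also have "\<dots> = N * s2 / 4" unfolding lam_def using s2p by (simp add: field_simps power2_eq_square)
    finally have "N * s2 \<le> N * s2 / 4 + real (card G) * (31 * s2) + N * (s2 / 2)"
      using m2 split bad good unfolding lam_def by linarith
    hence "N * s2 / 4 \<le> real (card G) * 31 * s2" by (simp add: algebra_simps)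
    hence "N / 4 \<le> real (card G) * 31" using s2p by (simp add: field_simps)
    thus ?thesis unfolding goal_eq N_def H_def by simp
  qed
qed




lemma manip_lb:
  assumes valid: "valid_attacker n m \<epsilon> M"
  assumes imp: "\<And>S yh C ya. S \<in> set_pmf (public_rand d G) \<Longrightarrow> (\<forall>i<n. yh i \<in> {rr_scale \<epsilon>, - rr_scale \<epsilon>}) \<Longrightarrow>
      Q S yh \<Longrightarrow> C \<subseteq> {..<n} \<Longrightarrow> card C = m \<Longrightarrow> (\<forall>i\<in>C. ya i \<in> {rr_scale \<epsilon>, - rr_scale \<epsilon>}) \<Longrightarrow>
      raptor_aggregate n G \<epsilon> m \<beta> (\<lambda>i. if i \<in> C then ya i else yh i) = v"
  assumes supp: "\<And>S i x. i < n \<Longrightarrow> set_pmf (raptor_client n G \<epsilon> S i x) \<subseteq> {rr_scale \<epsilon>, - rr_scale \<epsilon>}"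
  shows "emeasure (measure_pmf (manip m n G \<epsilon> \<beta> d P M)) {v} \<ge>
     (\<integral>\<^sup>+S. emeasure (measure_pmf (Pi_pmf {..<n} 0 (\<lambda>i. bind_pmf P (\<lambda>x. raptor_client n G \<epsilon> S i x)))) {yh. Q S yh}
       \<partial>measure_pmf (public_rand d G))"
proof -
  define R where "R = public_rand d G"
  define X where "X = Pi_pmf {..<n} 0 (\<lambda>_. P)"
  define Yh where "Yh x S = Pi_pmf {..<n} (0::real) (\<lambda>i. raptor_client n G \<epsilon> S i (x i))" for x S
  define B where "B x S = bind_pmf (M x S) (\<lambda>(C, ya). bind_pmf (Yh x S) (\<lambda>yh.
     return_pmf (raptor_aggregate n G \<epsilon> m \<beta> (\<lambda>i. if i \<in> C then ya i else yh i))))" for x S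
  have man: "manip m n G \<epsilon> \<beta> d P M = bind_pmf R (\<lambda>S. bind_pmf X (\<lambda>x. B x S))"
    unfolding manip_def R_def X_def B_def Yh_def by (rule bind_commute_pmf)
  have inner: "emeasure (measure_pmf (B x S)) {v} \<ge> emeasure (measure_pmf (Yh x S)) {yh. Q S yh}"
    if S: "S \<in> set_pmf R" for x S
  proof -
    have eqB: "emeasure (measure_pmf (B x S)) {v} = (\<integral>\<^sup>+Cy. emeasure (measure_pmf (bind_pmf (Yh x S) (\<lambda>yh.
       return_pmf (raptor_aggregate n G \<epsilon> m \<beta> (\<lambda>i. if i \<in> fst Cy then snd Cy i else yh i))))) {v} \<partial>measure_pmf (M x S))"
      unfolding B_def by (simp add: case_prod_beta)
    have mono: "(\<integral>\<^sup>+Cy. emeasure (measure_pmf (Yh x S)) {yh. Q S yh} \<partial>measure_pmf (M x S)) \<le> (\<integral>\<^sup>+Cy. emeasure (measure_pmf (bind_pmf (Yh x S) (\<lambda>yh.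
       return_pmf (raptor_aggregate n G \<epsilon> m \<beta> (\<lambda>i. if i \<in> fst Cy then snd Cy i else yh i))))) {v} \<partial>measure_pmf (M x S))"
    proof (intro nn_integral_mono_AE AE_pmfI)
      fix Cy assume Cy: "Cy \<in> set_pmf (M x S)"
      obtain C ya where Cyeq: "Cy = (C, ya)" by (cases Cy)
      have vC: "C \<subseteq> {..<n}" "card C = m" "\<forall>i\<in>C. ya i \<in> {rr_scale \<epsilon>, - rr_scale \<epsilon>}"
        using valid Cy unfolding valid_attacker_def Cyeq by blast+
      have "bind_pmf (Yh x S) (\<lambda>yh. return_pmf (raptor_aggregate n G \<epsilon> m \<beta> (\<lambda>i. if i \<in> C then ya i else yh i)))
          = map_pmf (\<lambda>yh. raptor_aggregate n G \<epsilon> m \<beta> (\<lambda>i. if i \<in> C then ya i else yh i)) (Yh x S)"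
        by (simp add: map_pmf_def)
      hence "emeasure (measure_pmf (bind_pmf (Yh x S) (\<lambda>yh. return_pmf (raptor_aggregate n G \<epsilon> m \<beta> (\<lambda>i. if i \<in> C then ya i else yh i))))) {v}
          = emeasure (measure_pmf (Yh x S)) {yh. raptor_aggregate n G \<epsilon> m \<beta> (\<lambda>i. if i \<in> C then ya i else yh i) = v}"
        by (simp add: vimage_def)
      also have "\<dots> \<ge> emeasure (measure_pmf (Yh x S)) {yh. Q S yh}"
      proof -
        have "emeasure (measure_pmf (Yh x S)) {yh. Q S yh} = emeasure (measure_pmf (Yh x S)) ({yh. Q S yh} \<inter> set_pmf (Yh x S))"
          by (simp add: emeasure_Int_set_pmf)
        also have "\<dots> \<le> emeasure (measure_pmf (Yh x S)) {yh. raptor_aggregate n G \<epsilon> m \<beta> (\<lambda>i. if i \<in> C then ya i else yh i) = v}"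
        proof (rule emeasure_mono)
          show "{yh. Q S yh} \<inter> set_pmf (Yh x S) \<subseteq> {yh. raptor_aggregate n G \<epsilon> m \<beta> (\<lambda>i. if i \<in> C then ya i else yh i) = v}"
          proof
            fix yh assume yh: "yh \<in> {yh. Q S yh} \<inter> set_pmf (Yh x S)"
            have "\<forall>i<n. yh i \<in> {rr_scale \<epsilon>, - rr_scale \<epsilon>}"
            proof (intro allI impI)
              fix i assume "i < n"
              hence "yh i \<in> set_pmf (raptor_client n G \<epsilon> S i (x i))"
                using yh unfolding Yh_def by (auto simp: set_Pi_pmf PiE_dflt_def)
              thus "yh i \<in> {rr_scale \<epsilon>, - rr_scale \<epsilon>}" using supp[OF \<open>i < n\<close>] by blast
            qed
            thus "yh \<in> {yh. raptor_aggregate n G \<epsilon> m \<beta> (\<lambda>i. if i \<in> C then ya i else yh i) = v}"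
              using imp[of S yh C ya] S yh vC unfolding R_def by auto
          qed
        qed simp
        finally show ?thesis .
      qed
      finally show "emeasure (measure_pmf (Yh x S)) {yh. Q S yh} \<le> emeasure (measure_pmf (bind_pmf (Yh x S) (\<lambda>yh.
       return_pmf (raptor_aggregate n G \<epsilon> m \<beta> (\<lambda>i. if i \<in> fst Cy then snd Cy i else yh i))))) {v}"
        by (simp only: Cyeq fst_conv snd_conv)
    qed
    have c1: "(\<integral>\<^sup>+Cy. emeasure (measure_pmf (Yh x S)) {yh. Q S yh} \<partial>measure_pmf (M x S)) = emeasure (measure_pmf (Yh x S)) {yh. Q S yh}"
      by (simp add: measure_pmf.emeasure_space_1)
    show ?thesis using eqB mono c1 by simp
  qed
  have eqM: "emeasure (measure_pmf (manip m n G \<epsilon> \<beta> d P M)) {v} = (\<integral>\<^sup>+S. \<integral>\<^sup>+x. emeasure (measure_pmf (B x S)) {v} \<partial>measure_pmf X \<partial>measure_pmf R)"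
    unfolding man by simp
  have ge: "(\<integral>\<^sup>+S. \<integral>\<^sup>+x. emeasure (measure_pmf (Yh x S)) {yh. Q S yh} \<partial>measure_pmf X \<partial>measure_pmf R) \<le> (\<integral>\<^sup>+S. \<integral>\<^sup>+x. emeasure (measure_pmf (B x S)) {v} \<partial>measure_pmf X \<partial>measure_pmf R)"
    by (intro nn_integral_mono_AE AE_pmfI nn_integral_mono inner)
  have "(\<integral>\<^sup>+S. \<integral>\<^sup>+x. emeasure (measure_pmf (Yh x S)) {yh. Q S yh} \<partial>measure_pmf X \<partial>measure_pmf R)
     = (\<integral>\<^sup>+S. emeasure (measure_pmf (bind_pmf X (\<lambda>x. Yh x S))) {yh. Q S yh} \<partial>measure_pmf R)"
    by simp
  also have "(\<lambda>S. bind_pmf X (\<lambda>x. Yh x S)) = (\<lambda>S. Pi_pmf {..<n} 0 (\<lambda>i. bind_pmf P (\<lambda>x. raptor_client n G \<epsilon> S i x)))"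
    unfolding X_def Yh_def by (intro ext, subst Pi_pmf_bind[where d'=0]) auto
  finally show ?thesis using eqM ge unfolding R_def by simp
qed




lemma rr_pos: "\<epsilon> > 0 \<Longrightarrow> rr_scale \<epsilon> > 0"
  unfolding rr_scale_def by (simp add: add_pos_pos)

lemma set_RR: "set_pmf (RR \<epsilon> b) \<subseteq> {b * rr_scale \<epsilon>, - b * rr_scale \<epsilon>}"
  unfolding RR_def by auto

lemma finite_set_RR: "finite (set_pmf (RR \<epsilon> b))"
  using set_RR[of \<epsilon> b] by (rule finite_subset) simp

lemma client_supp: "set_pmf (raptor_client n G \<epsilon> S i x) \<subseteq> {rr_scale \<epsilon>, - rr_scale \<epsilon>}"
  unfolding raptor_client_def using set_RR by fastforce

lemma E_RR:
  assumes "\<epsilon> > 0"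
  shows "measure_pmf.expectation (RR \<epsilon> b) (\<lambda>y. y) = b"
proof -
  define e where "e = exp \<epsilon>"
  have e1: "e > 1" unfolding e_def using assms by simp
  have q: "0 \<le> e / (e + 1)" "e / (e + 1) \<le> 1" using e1 by auto
  have "measure_pmf.expectation (RR \<epsilon> b) (\<lambda>y. y)
      = b * rr_scale \<epsilon> * (e / (e + 1)) + (- b * rr_scale \<epsilon>) * (1 - e / (e + 1))"
    unfolding RR_def e_def[symmetric] using q unfolding e_def by simp
  also have "\<dots> = b"
  proof -
    have ne: "e - 1 \<noteq> 0" "e + 1 \<noteq> 0" using e1 by auto
    have aux: "b * r * q + - b * r * (1 - q) = b * r * (q - (1 - q))" for r q :: real by (simp add: algebra_simps)
    have "b * ((e + 1) / (e - 1)) * (e / (e + 1)) + - b * ((e + 1) / (e - 1)) * (1 - e / (e + 1))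
        = b * ((e + 1) / (e - 1)) * ((e / (e + 1)) - (1 - e / (e + 1)))" by (rule aux)
    also have "(e / (e + 1)) - (1 - e / (e + 1)) = (e - 1) / (e + 1)"
    proof -
      have "1 = (e+1)/(e+1)" using ne by simp
      hence "(e / (e + 1)) - (1 - e / (e + 1)) = (e + e - (e+1)) / (e+1)" by (metis diff_divide_distrib diff_diff_eq2)
      thus ?thesis by simp
    qed
    also have "b * ((e + 1) / (e - 1)) * ((e - 1) / (e + 1)) = b" using ne by simp
    finally show ?thesis unfolding rr_scale_def e_def[symmetric] .
  qed
  finally show ?thesis .
qed

lemma E_Dist:
  assumes "\<epsilon> > 0" "set_pmf P \<subseteq> {..<d}" "even d" "S (group_of n G i) \<in> halfsets d"
  shows "measure_pmf.expectation (bind_pmf P (\<lambda>x. raptor_client n G \<epsilon> S i x)) (\<lambda>y. y)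
       = (\<Sum>a<d. (pmf P a - 1 / real d) * sgs (S (group_of n G i)) a)"
proof -
  define A where "A = S (group_of n G i)"
  have "measure_pmf.expectation (bind_pmf P (\<lambda>x. raptor_client n G \<epsilon> S i x)) (\<lambda>y. y)
      = (\<Sum>a<d. pmf P a *\<^sub>R measure_pmf.expectation (raptor_client n G \<epsilon> S i a) (\<lambda>y. y))"
    by (rule pmf_expectation_bind) (use assms in \<open>auto simp: raptor_client_def finite_set_RR\<close>)
  also have "\<dots> = (\<Sum>a<d. pmf P a * sgs A a)"
    by (intro sum.cong refl) (simp add: raptor_client_def E_RR[OF assms(1)] sgs_def A_def)
  also have "\<dots> = (\<Sum>a<d. (pmf P a - 1 / real d) * sgs A a + (1 / real d) * sgs A a)"
    by (intro sum.cong refl) (simp add: algebra_simps)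
  also have "\<dots> = (\<Sum>a<d. (pmf P a - 1 / real d) * sgs A a) + (1 / real d) * (\<Sum>a<d. sgs A a)"
    by (simp only: sum.distrib sum_distrib_left)
  also have "(\<Sum>a<d. sgs A a) = 0" using sum_sgs_zero[OF assms(3)] assms(4) unfolding A_def by blast
  finally show ?thesis unfolding A_def by simp
qed

lemma hoeff:
  fixes D :: "nat \<Rightarrow> real pmf"
  assumes "I \<subseteq> {..<n}" "card I = k" "k > 0" "r > 0" "\<And>i. i \<in> I \<Longrightarrow> set_pmf (D i) \<subseteq> {r, -r}" "t \<ge> 0"
  shows "measure_pmf.prob (Pi_pmf {..<n} 0 D)
           {f. \<bar>(\<Sum>i\<in>I. f i) - (\<Sum>i\<in>I. measure_pmf.expectation (D i) (\<lambda>y. y))\<bar> \<ge> t}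
         \<le> 2 * exp (-2 * t^2 / (real k * (2 * r)^2))"
proof -
  define Mp where "Mp = measure_pmf (Pi_pmf {..<n} 0 D)"
  have finI: "finite I" using assms(1) finite_subset by blast
  have comp: "measure_pmf.expectation (Pi_pmf {..<n} 0 D) (\<lambda>f. f i) = measure_pmf.expectation (D i) (\<lambda>y. y)"
    if "i \<in> I" for i
  proof -
    have "map_pmf (\<lambda>f. f i) (Pi_pmf {..<n} 0 D) = D i"
      using that assms(1) by (subst Pi_pmf_component) auto
    hence "measure_pmf.expectation (map_pmf (\<lambda>f. f i) (Pi_pmf {..<n} 0 D)) (\<lambda>y. y) = measure_pmf.expectation (D i) (\<lambda>y. y)"
      by simp
    thus ?thesis by simp
  qed
  have indep0: "prob_space.indep_vars Mp (\<lambda>_. count_space UNIV) (\<lambda>x f. f x) {..<n}"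
    unfolding Mp_def by (rule indep_vars_Pi_pmf) simp
  have indep1: "prob_space.indep_vars Mp (\<lambda>_. count_space UNIV) (\<lambda>x f. f x) I"
    using prob_space.indep_vars_subset[OF _ indep0 assms(1)] Mp_def measure_pmf.prob_space_axioms by blast
  have indep: "prob_space.indep_vars Mp (\<lambda>_. borel) (\<lambda>x f. f x) I"
    unfolding Mp_def
    by (rule prob_space.indep_vars_compose2[OF measure_pmf.prob_space_axioms indep1[unfolded Mp_def], where Y="\<lambda>_ z. z" and N="\<lambda>_. borel"]) simp
  have ii: "indep_interval_bounded_random_variables Mp I (\<lambda>i f. f i) (\<lambda>_. -r) (\<lambda>_. r)"
    unfolding indep_interval_bounded_random_variables_def indep_interval_bounded_random_variables_axioms_def
  proof (intro conjI ballI allI impI)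
    show "prob_space Mp" unfolding Mp_def by (rule measure_pmf.prob_space_axioms)
    show "finite I" by (rule finI)
    show "prob_space.indep_vars Mp (\<lambda>_. borel) (\<lambda>i f. f i) I" by (rule indep)
    fix i assume i: "i \<in> I"
    show "AE x in Mp. x i \<in> {- r..r}"
      unfolding Mp_def
    proof (rule AE_pmfI)
      fix f assume "f \<in> set_pmf (Pi_pmf {..<n} 0 D)"
      hence "f i \<in> set_pmf (D i)" using i assms(1) by (auto simp: set_Pi_pmf PiE_dflt_def)
      thus "f i \<in> {-r..r}" using assms(4) assms(5)[OF i] by auto
    qed
  qed
  interpret H: Hoeffding_ineq Mp I "\<lambda>i f. f i" "\<lambda>_. -r" "\<lambda>_. r"
    "\<Sum>i\<in>I. measure_pmf.expectation (Pi_pmf {..<n} 0 D) (\<lambda>f. f i)"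
    using ii unfolding Hoeffding_ineq_def Mp_def by simp
  have "H.prob {x \<in> space Mp. \<bar>(\<Sum>i\<in>I. x i) - (\<Sum>i\<in>I. measure_pmf.expectation (Pi_pmf {..<n} 0 D) (\<lambda>f. f i))\<bar> \<ge> t}
        \<le> 2 * exp (-2 * t\<^sup>2 / (\<Sum>i\<in>I. (r - - r)\<^sup>2))"
    by (rule H.Hoeffding_ineq_abs_ge) (use assms finI in \<open>auto intro!: sum_pos\<close>)
  moreover have "(\<Sum>i\<in>I. (r - - r)\<^sup>2) = real k * (2 * r)^2" using assms(2) by simp
  moreover have "(\<Sum>i\<in>I. measure_pmf.expectation (Pi_pmf {..<n} 0 D) (\<lambda>f. f i)) = (\<Sum>i\<in>I. measure_pmf.expectation (D i) (\<lambda>y. y))"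
    by (intro sum.cong refl comp)
  ultimately show ?thesis unfolding Mp_def using assms(2) by simp
qed




lemma grp_facts:
  assumes "0 < G" "G dvd n" "0 < n" "g < G"
  shows "group_users n G g \<subseteq> {..<n}" "card (group_users n G g) = n div G"
        "\<And>i. i \<in> group_users n G g \<Longrightarrow> group_of n G i = g"
proof -
  define k where "k = n div G"
  have nk: "n = G * k" using assms(2) unfolding k_def by simp
  have k0: "k > 0" using assms nk by (metis gr0I mult_0_right)
  have "Suc g * k \<le> G * k" using assms(4) by (intro mult_right_mono) auto
  thus "group_users n G g \<subseteq> {..<n}" unfolding group_users_def k_def[symmetric] nk by auto
  show "card (group_users n G g) = n div G" unfolding group_users_def k_def[symmetric] by simp
  fix i assume "i \<in> group_users n G g"
  hence "g * k \<le> i" "i < Suc g * k" unfolding group_users_def k_def[symmetric] by auto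
  thus "group_of n G i = g" unfolding group_of_def k_def[symmetric]
    by (metis add.commute div_nat_eqI mult.commute mult_Suc)
qed

lemma corr:
  fixes ya yh :: "nat \<Rightarrow> real"
  assumes "I \<subseteq> {..<n}" "finite C" "card C = m" "\<forall>i\<in>C. ya i \<in> {r, -r}" "\<forall>i<n. yh i \<in> {r, -r}" "r \<ge> 0"
  shows "\<bar>(\<Sum>i\<in>I. if i \<in> C then ya i else yh i) - (\<Sum>i\<in>I. yh i)\<bar> \<le> 2 * r * real m"
proof -
  have fI: "finite I" using assms(1) finite_subset by blast
  have "(\<Sum>i\<in>I. if i \<in> C then ya i else yh i) - (\<Sum>i\<in>I. yh i) = (\<Sum>i\<in>I. (if i \<in> C then ya i else yh i) - yh i)"
    by (simp add: sum_subtractf)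
  also have "\<dots> = (\<Sum>i\<in>I. if i \<in> C then ya i - yh i else 0)"
    by (intro sum.cong) auto
  finally have eq: "(\<Sum>i\<in>I. if i \<in> C then ya i else yh i) - (\<Sum>i\<in>I. yh i) = (\<Sum>i\<in>I. if i \<in> C then ya i - yh i else 0)" .
  have "\<bar>\<Sum>i\<in>I. if i \<in> C then ya i - yh i else 0\<bar> \<le> (\<Sum>i\<in>I. \<bar>if i \<in> C then ya i - yh i else 0\<bar>)"
    by (rule sum_abs)
  also have "\<dots> \<le> (\<Sum>i\<in>I. if i \<in> C then 2 * r else 0)"
  proof (intro sum_mono)
    fix i assume i: "i \<in> I"
    show "\<bar>if i \<in> C then ya i - yh i else 0\<bar> \<le> (if i \<in> C then 2 * r else 0)"
    proof (cases "i \<in> C")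
      case True
      have "i < n" using i assms(1) by auto
      hence "yh i \<in> {r, -r}" using assms(5) by blast
      moreover have "ya i \<in> {r, -r}" using True assms(4) by blast
      ultimately show ?thesis using True assms(6) by auto
    qed simp
  qed
  also have "\<dots> = (\<Sum>i\<in>I \<inter> C. 2 * r)"
    by (rule sum.inter_restrict[OF fI, symmetric])
  also have "\<dots> = 2 * r * real (card (I \<inter> C))" by simp
  also have "\<dots> \<le> 2 * r * real m"
    using assms(2,3,6) by (intro mult_left_mono) (auto intro: card_mono)
  finally show ?thesis unfolding eq .
qed

definition Yd :: "nat pmf \<Rightarrow> nat \<Rightarrow> nat set \<Rightarrow> real" where
  "Yd P d A = (\<Sum>a<d. (pmf P a - 1 / real d) * sgs A a)"

definition Dh :: "nat \<Rightarrow> nat \<Rightarrow> real \<Rightarrow> nat pmf \<Rightarrow> (nat \<Rightarrow> nat set) \<Rightarrow> (nat \<Rightarrow> real) pmf" where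
  "Dh n G \<epsilon> P S = Pi_pmf {..<n} 0 (\<lambda>i. bind_pmf P (\<lambda>x. raptor_client n G \<epsilon> S i x))"

definition aa :: "nat \<Rightarrow> nat \<Rightarrow> real \<Rightarrow> real \<Rightarrow> real" where
  "aa n G \<epsilon> \<beta> = rr_scale \<epsilon> * sqrt (6 * real G / real n * ln (4 * real G / \<beta>))"

definition Conc :: "nat \<Rightarrow> nat \<Rightarrow> real \<Rightarrow> real \<Rightarrow> nat pmf \<Rightarrow> nat \<Rightarrow> (nat \<Rightarrow> nat set) \<Rightarrow> (nat \<Rightarrow> real) \<Rightarrow> bool" where
  "Conc n G \<epsilon> \<beta> P d S yh \<longleftrightarrow> (\<forall>g<G. \<bar>(\<Sum>i\<in>group_users n G g. yh i) - real (n div G) * Yd P d (S g)\<bar>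
       < real (n div G) * aa n G \<epsilon> \<beta>)"

lemma S_half:
  assumes "S \<in> set_pmf (public_rand d G)" "g < G"
  shows "S g \<in> halfsets d"
proof -
  have ne: "halfsets d \<noteq> {}" using halfsets_ne by blast
  have "S g \<in> set_pmf (pmf_of_set {A. A \<subseteq> {..<d} \<and> card A = d div 2})"
    using assms unfolding public_rand_def by (auto simp: set_Pi_pmf PiE_dflt_def)
  thus ?thesis using ne finite_halfsets unfolding halfsets_def[symmetric] by simp
qed

lemma conc_prob:
  assumes G0: "0 < G" and Gdvd: "G dvd n" and n0: "0 < n" and eps: "0 < \<epsilon>"
    and b0: "0 < \<beta>" and b1: "\<beta> < 1" and ev: "even d" and d0: "0 < d" and Ps: "set_pmf P \<subseteq> {..<d}"
    and S: "S \<in> set_pmf (public_rand d G)"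
  shows "measure_pmf.prob (Dh n G \<epsilon> P S) {yh. Conc n G \<epsilon> \<beta> P d S yh} \<ge> 1 - \<beta> / 2"
proof -
  define k where "k = n div G"
  have nk: "n = G * k" using Gdvd unfolding k_def by simp
  have k0: "k > 0" using G0 n0 nk by (metis gr0I mult_0_right)
  define rr where "rr = rr_scale \<epsilon>"
  have rr0: "rr > 0" unfolding rr_def using rr_pos eps by blast
  define L4 where "L4 = ln (4 * real G / \<beta>)"
  have GB: "4 * real G / \<beta> \<ge> 1" using G0 b0 b1 by (simp add: field_simps)
  hence L40: "L4 \<ge> 0" unfolding L4_def by simp
  define a where "a = aa n G \<epsilon> \<beta>"
  have a_eq: "a = rr * sqrt (6 * real G / real n * L4)" unfolding a_def aa_def rr_def L4_def ..
  define D where "D i = bind_pmf P (\<lambda>x. raptor_client n G \<epsilon> S i x)" for i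
  have Dsupp: "set_pmf (D i) \<subseteq> {rr, -rr}" for i
    unfolding D_def rr_def using client_supp by fastforce
  have bad_g: "measure_pmf.prob (Dh n G \<epsilon> P S)
       {yh. \<bar>(\<Sum>i\<in>group_users n G g. yh i) - real k * Yd P d (S g)\<bar> \<ge> real k * a} \<le> \<beta> / (2 * real G)"
    if g: "g < G" for g
  proof -
    have gf: "group_users n G g \<subseteq> {..<n}" "card (group_users n G g) = k"
      "\<And>i. i \<in> group_users n G g \<Longrightarrow> group_of n G i = g"
      using grp_facts[OF G0 Gdvd n0 g] unfolding k_def by auto
    have Sg: "S g \<in> halfsets d" using S_half[OF S g] .
    have mu: "(\<Sum>i\<in>group_users n G g. measure_pmf.expectation (D i) (\<lambda>y. y)) = real k * Yd P d (S g)"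
    proof -
      have "(\<Sum>i\<in>group_users n G g. measure_pmf.expectation (D i) (\<lambda>y. y)) = (\<Sum>i\<in>group_users n G g. Yd P d (S g))"
      proof (intro sum.cong refl)
        fix i assume i: "i \<in> group_users n G g"
        show "measure_pmf.expectation (D i) (\<lambda>y. y) = Yd P d (S g)"
          unfolding D_def Yd_def using E_Dist[OF eps Ps ev, of S n G i] gf(3)[OF i] Sg by simp
      qed
      thus ?thesis using gf(2) by simp
    qed
    have ka0: "real k * a \<ge> 0" using rr0 L40 unfolding a_eq by (intro mult_nonneg_nonneg) auto
    have "measure_pmf.prob (Pi_pmf {..<n} 0 D)
        {f. \<bar>(\<Sum>i\<in>group_users n G g. f i) - (\<Sum>i\<in>group_users n G g. measure_pmf.expectation (D i) (\<lambda>y. y))\<bar> \<ge> real k * a}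
        \<le> 2 * exp (-2 * (real k * a)^2 / (real k * (2 * rr)^2))"
      by (rule hoeff[OF gf(1,2) k0 rr0 Dsupp ka0])
    also have "-2 * (real k * a)^2 / (real k * (2 * rr)^2) = - (3 * L4)"
    proof -
      have sq: "(sqrt (6 * real G / real n * L4))^2 = 6 * real G / real n * L4"
        using L40 G0 n0 by simp
      have "(real k * a)^2 = real k ^2 * rr^2 * (6 * real G / real n * L4)"
        unfolding a_eq power_mult_distrib sq by simp
      moreover have "real n = real G * real k" using nk by simp
      ultimately show ?thesis using k0 rr0 G0 by (simp add: field_simps power2_eq_square)
    qed
    also have "2 * exp (- (3 * L4)) \<le> 2 * exp (- L4)" using L40 by simp
    also have "exp (- L4) = \<beta> / (4 * real G)"
      unfolding L4_def using G0 b0 by (simp add: exp_minus exp_ln)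
    finally have fin: "measure_pmf.prob (Pi_pmf {..<n} 0 D)
        {f. \<bar>(\<Sum>i\<in>group_users n G g. f i) - (\<Sum>i\<in>group_users n G g. measure_pmf.expectation (D i) (\<lambda>y. y))\<bar> \<ge> real k * a}
        \<le> \<beta> / (2 * real G)" by simp
    have DhD: "Dh n G \<epsilon> P S = Pi_pmf {..<n} 0 D" unfolding Dh_def D_def[abs_def] ..
    show ?thesis unfolding DhD mu[symmetric] by (rule fin)
  qed
  have "{yh. \<not> Conc n G \<epsilon> \<beta> P d S yh} = (\<Union>g\<in>{..<G}.
      {yh. \<bar>(\<Sum>i\<in>group_users n G g. yh i) - real k * Yd P d (S g)\<bar> \<ge> real k * a})"
    unfolding Conc_def k_def a_def by (auto simp: not_less)
  hence "measure_pmf.prob (Dh n G \<epsilon> P S) {yh. \<not> Conc n G \<epsilon> \<beta> P d S yh}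
       \<le> (\<Sum>g\<in>{..<G}. measure_pmf.prob (Dh n G \<epsilon> P S)
            {yh. \<bar>(\<Sum>i\<in>group_users n G g. yh i) - real k * Yd P d (S g)\<bar> \<ge> real k * a})"
    by (simp add: measure_pmf.finite_measure_subadditive_finite)
  also have "\<dots> \<le> (\<Sum>g\<in>{..<G}. \<beta> / (2 * real G))" by (intro sum_mono bad_g) auto
  also have "\<dots> = \<beta> / 2" using G0 by simp
  finally have "measure_pmf.prob (Dh n G \<epsilon> P S) {yh. \<not> Conc n G \<epsilon> \<beta> P d S yh} \<le> \<beta> / 2" .
  moreover have "measure_pmf.prob (Dh n G \<epsilon> P S) {yh. \<not> Conc n G \<epsilon> \<beta> P d S yh}
      = 1 - measure_pmf.prob (Dh n G \<epsilon> P S) {yh. Conc n G \<epsilon> \<beta> P d S yh}"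
    using measure_pmf.prob_compl[of "{yh. Conc n G \<epsilon> \<beta> P d S yh}" "Dh n G \<epsilon> P S"]
    by (simp add: Compl_eq_Diff_UNIV[symmetric] Collect_neg_eq)
  ultimately show ?thesis by simp
qed


lemma alpha_eq: "raptor_alpha n G \<epsilon> m \<beta> = aa n G \<epsilon> \<beta> + 2 * rr_scale \<epsilon> * real m * (real G / real n)"
  unfolding raptor_alpha_def aa_def by (simp add: algebra_simps)

lemma aa_nonneg:
  assumes "0 < \<epsilon>" "0 < G" "0 < \<beta>" "\<beta> < 1"
  shows "aa n G \<epsilon> \<beta> \<ge> 0"
proof -
  have "4 * real G / \<beta> \<ge> 1" using assms by (simp add: field_simps)
  hence "ln (4 * real G / \<beta>) \<ge> 0" by simp
  thus ?thesis unfolding aa_def using rr_pos[OF assms(1)] by (intro mult_nonneg_nonneg) auto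
qed

lemma agg_unif:
  assumes G0: "0 < G" and Gdvd: "G dvd n" and n0: "0 < n" and eps: "0 < \<epsilon>" and b: "0 < \<beta>" "\<beta> < 1"
    and C: "C \<subseteq> {..<n}" "card C = m" "\<forall>i\<in>C. ya i \<in> {rr_scale \<epsilon>, - rr_scale \<epsilon>}"
    and yh: "\<forall>i<n. yh i \<in> {rr_scale \<epsilon>, - rr_scale \<epsilon>}"
    and conc: "Conc n G \<epsilon> \<beta> P d S yh" and Y0: "\<forall>g<G. Yd P d (S g) = 0"
  shows "raptor_aggregate n G \<epsilon> m \<beta> (\<lambda>i. if i \<in> C then ya i else yh i) = Uniform"
proof -
  define k where "k = n div G"
  have nk: "n = G * k" using Gdvd unfolding k_def by simp
  define t where "t = real G / real n"
  have t0: "t > 0" unfolding t_def using G0 n0 by simp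
  have tk: "t * real k = 1" unfolding t_def using nk G0 n0 by simp
  define rr where "rr = rr_scale \<epsilon>"
  have rr0: "rr > 0" unfolding rr_def using rr_pos eps by blast
  define a where "a = aa n G \<epsilon> \<beta>"
  have a0: "a \<ge> 0" unfolding a_def using aa_nonneg eps G0 b by blast
  have al: "raptor_alpha n G \<epsilon> m \<beta> = a + 2 * rr * real m * t" unfolding a_def rr_def t_def alpha_eq ..
  have "\<not> (\<bar>real G / real n * (\<Sum>i\<in>group_users n G g. if i \<in> C then ya i else yh i)\<bar> > 2 * raptor_alpha n G \<epsilon> m \<beta>)"
    if g: "g < G" for g
  proof -
    have gf: "group_users n G g \<subseteq> {..<n}" using grp_facts[OF G0 Gdvd n0 g] by blast
    have cr: "\<bar>(\<Sum>i\<in>group_users n G g. if i \<in> C then ya i else yh i) - (\<Sum>i\<in>group_users n G g. yh i)\<bar> \<le> 2 * rr * real m"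
      using corr[OF gf _ C(2)] C(1,3) yh rr0 finite_subset[OF C(1)] unfolding rr_def by auto
    have ch: "\<bar>\<Sum>i\<in>group_users n G g. yh i\<bar> < real k * a"
      using conc g Y0 unfolding Conc_def k_def a_def by auto
    have "\<bar>\<Sum>i\<in>group_users n G g. if i \<in> C then ya i else yh i\<bar> < real k * a + 2 * rr * real m"
      using cr ch by linarith
    hence "t * \<bar>\<Sum>i\<in>group_users n G g. if i \<in> C then ya i else yh i\<bar> < t * (real k * a + 2 * rr * real m)"
      using t0 by simp
    also have "\<dots> = a + 2 * rr * real m * t" using tk by (simp add: algebra_simps)
    finally have "\<bar>t * (\<Sum>i\<in>group_users n G g. if i \<in> C then ya i else yh i)\<bar> < a + 2 * rr * real m * t"
      using t0 by (simp add: abs_mult)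
    moreover have "a + 2 * rr * real m * t \<le> 2 * (a + 2 * rr * real m * t)" using a0 rr0 t0 by simp
    ultimately show ?thesis unfolding al t_def by linarith
  qed
  thus ?thesis unfolding raptor_aggregate_def by auto
qed

lemma agg_notunif:
  assumes G0: "0 < G" and Gdvd: "G dvd n" and n0: "0 < n" and eps: "0 < \<epsilon>" and b: "0 < \<beta>" "\<beta> < 1"
    and C: "C \<subseteq> {..<n}" "card C = m" "\<forall>i\<in>C. ya i \<in> {rr_scale \<epsilon>, - rr_scale \<epsilon>}"
    and yh: "\<forall>i<n. yh i \<in> {rr_scale \<epsilon>, - rr_scale \<epsilon>}"
    and conc: "Conc n G \<epsilon> \<beta> P d S yh" and g: "g < G"
    and big: "\<bar>Yd P d (S g)\<bar> \<ge> 3 * aa n G \<epsilon> \<beta> + 3 * (2 * rr_scale \<epsilon> * real m * (real G / real n))"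
  shows "raptor_aggregate n G \<epsilon> m \<beta> (\<lambda>i. if i \<in> C then ya i else yh i) = NotUniform"
proof -
  define k where "k = n div G"
  have nk: "n = G * k" using Gdvd unfolding k_def by simp
  define t where "t = real G / real n"
  have t0: "t > 0" unfolding t_def using G0 n0 by simp
  have tk: "t * real k = 1" unfolding t_def using nk G0 n0 by simp
  define rr where "rr = rr_scale \<epsilon>"
  have rr0: "rr > 0" unfolding rr_def using rr_pos eps by blast
  define a where "a = aa n G \<epsilon> \<beta>"
  have a0: "a \<ge> 0" unfolding a_def using aa_nonneg eps G0 b by blast
  define B where "B = 2 * rr * real m * t"
  have al: "raptor_alpha n G \<epsilon> m \<beta> = a + B" unfolding a_def rr_def t_def B_def alpha_eq ..
  have gf: "group_users n G g \<subseteq> {..<n}" using grp_facts[OF G0 Gdvd n0 g] by blast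
  have cr: "\<bar>(\<Sum>i\<in>group_users n G g. if i \<in> C then ya i else yh i) - (\<Sum>i\<in>group_users n G g. yh i)\<bar> \<le> 2 * rr * real m"
    using corr[OF gf _ C(2)] C(1,3) yh rr0 finite_subset[OF C(1)] unfolding rr_def by auto
  have ch: "\<bar>(\<Sum>i\<in>group_users n G g. yh i) - real k * Yd P d (S g)\<bar> < real k * a"
    using conc g unfolding Conc_def k_def a_def by auto
  have bigk: "real k * \<bar>Yd P d (S g)\<bar> \<ge> real k * (3 * a + 3 * B)"
    using big unfolding a_def B_def rr_def t_def by (intro mult_left_mono) auto
  have "\<bar>real k * Yd P d (S g)\<bar> = real k * \<bar>Yd P d (S g)\<bar>" by (simp add: abs_mult)
  hence "\<bar>\<Sum>i\<in>group_users n G g. if i \<in> C then ya i else yh i\<bar> > real k * (3 * a + 3 * B) - real k * a - 2 * rr * real m"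
    using cr ch bigk by linarith
  hence "t * \<bar>\<Sum>i\<in>group_users n G g. if i \<in> C then ya i else yh i\<bar> > t * (real k * (3 * a + 3 * B) - real k * a - 2 * rr * real m)"
    using t0 by simp
  moreover have "t * (real k * (3 * a + 3 * B) - real k * a - 2 * rr * real m) = 2 * (a + B)"
  proof -
    have tkX: "\<And>X. t * (real k * X) = X" using tk by (metis mult.assoc mult_1)
    have "t * (real k * (3 * a + 3 * B) - real k * a - 2 * rr * real m)
        = t * (real k * (3 * a + 3 * B)) - t * (real k * a) - t * (2 * rr * real m)"
      by (simp add: right_diff_distrib)
    also have "\<dots> = (3 * a + 3 * B) - a - B" unfolding tkX B_def by (simp add: mult_ac)
    finally show ?thesis by simp
  qed
  ultimately have "\<bar>real G / real n * (\<Sum>i\<in>group_users n G g. if i \<in> C then ya i else yh i)\<bar> > 2 * raptor_alpha n G \<epsilon> m \<beta>"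
    unfolding al using t0 unfolding t_def[symmetric] by (simp add: abs_mult)
  thus ?thesis unfolding raptor_aggregate_def using g by auto
qed




definition Gf0 :: "real \<Rightarrow> nat" where "Gf0 \<beta> = nat \<lceil>124 * (ln (1 / \<beta>) + 1)\<rceil>"

lemma Gf0_ge:
  assumes "0 < \<beta>" "\<beta> < 1"
  shows "real (Gf0 \<beta>) \<ge> 124 * (ln (1 / \<beta>) + 1)" "Gf0 \<beta> \<ge> 2"
proof -
  have l: "ln (1 / \<beta>) > 0" using assms by simp
  hence pos: "124 * (ln (1 / \<beta>) + 1) > 124" by simp
  have "real (Gf0 \<beta>) = real_of_int \<lceil>124 * (ln (1 / \<beta>) + 1)\<rceil>"
    unfolding Gf0_def using pos by (simp add: ceiling_le_zero not_le)
  thus g: "real (Gf0 \<beta>) \<ge> 124 * (ln (1 / \<beta>) + 1)" by linarith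
  with pos show "Gf0 \<beta> \<ge> 2" by linarith
qed

lemma Gf0_le:
  assumes "0 < \<beta>" "\<beta> < 1"
  shows "real (Gf0 \<beta>) \<le> 124 * (ln (1 / \<beta>) + 1) + 1"
proof -
  have l: "ln (1 / \<beta>) > 0" using assms by simp
  hence pos: "124 * (ln (1 / \<beta>) + 1) > 124" by simp
  have "real (Gf0 \<beta>) = real_of_int \<lceil>124 * (ln (1 / \<beta>) + 1)\<rceil>"
    unfolding Gf0_def using pos by (simp add: ceiling_le_zero not_le)
  thus ?thesis using of_int_ceiling_le_add_one[of "124 * (ln (1 / \<beta>) + 1)"] by linarith
qed

lemma pow_bound:
  assumes "0 < \<beta>" "\<beta> < 1"
  shows "(123 / 124 :: real) ^ Gf0 \<beta> \<le> \<beta> / 2"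
proof -
  define G where "G = Gf0 \<beta>"
  have "(123/124::real) \<le> exp (- 1/124)"
    using exp_ge_add_one_self[of "-1/124"] by simp
  hence "(123/124::real) ^ G \<le> exp (- 1/124) ^ G" by (intro power_mono) auto
  also have "\<dots> = exp (- real G / 124)" by (simp add: exp_of_nat_mult[symmetric])
  also have "\<dots> \<le> exp (- (ln (1 / \<beta>) + 1))"
    using Gf0_ge[OF assms] unfolding G_def by simp
  also have "\<dots> = \<beta> * exp (-1)" using assms by (simp add: exp_diff exp_minus ln_div divide_inverse)
  also have "\<dots> \<le> \<beta> / 2"
  proof -
    have "exp (1::real) \<ge> 2" using exp_ge_add_one_self[of 1] by simp
    hence "exp (-1::real) \<le> 1/2" by (simp add: exp_minus field_simps)
    thus ?thesis using assms by (simp add: mult_left_mono)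
  qed
  finally show ?thesis unfolding G_def .
qed

lemma L4_le:
  assumes "0 < \<beta>" "\<beta> < 1" "real G \<ge> 2"
  shows "ln (4 * real G / \<beta>) \<le> 3 * ln (real G / \<beta>)"
proof -
  have g: "real G / \<beta> \<ge> 2" using assms by (simp add: field_simps)
  have "4 * real G / \<beta> = 4 * (real G / \<beta>)" by simp
  moreover have "ln (4 * (real G / \<beta>)) = ln 4 + ln (real G / \<beta>)" by (rule ln_mult_pos) (use g in auto)
  ultimately have "ln (4 * real G / \<beta>) = ln 4 + ln (real G / \<beta>)" by simp
  also have "ln (4::real) = 2 * ln 2" using ln_realpow[of 2 2] by simp
  also have "ln 2 \<le> ln (real G / \<beta>)" using g by simp
  finally show ?thesis by simp
qed

lemma Gf0_theta: "(\<lambda>b. real (Gf0 b)) \<in> \<Theta>[at_right 0](\<lambda>b. ln (1 / b))"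
proof (rule bigthetaI)
  have ev: "eventually (\<lambda>b. 0 < b \<and> b < exp (-1)) (at_right (0::real))"
    by (rule eventually_mono[OF eventually_at_right_real[of 0 "exp (-1)"]]) auto
  show "(\<lambda>b. real (Gf0 b)) \<in> O[at_right 0](\<lambda>b. ln (1 / b))"
  proof (rule bigoI[where c = 249])
    show "eventually (\<lambda>b. norm (real (Gf0 b)) \<le> 249 * norm (ln (1 / b))) (at_right 0)"
      using ev
    proof eventually_elim
      case (elim b)
      have b1: "b < 1" using elim by (meson exp_less_one_iff less_trans neg_less_0_iff_less zero_less_one)
      have l1: "ln (1 / b) \<ge> 1"
      proof -
        have "1 / b \<ge> exp 1" using elim by (simp add: exp_minus field_simps)
        thus ?thesis using elim by (metis exp_gt_zero ln_exp ln_le_cancel_iff less_le_trans)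
      qed
      have "real (Gf0 b) \<le> 124 * (ln (1 / b) + 1) + 1"
        using Gf0_le elim b1 by blast
      also have "\<dots> \<le> 249 * ln (1 / b)" using l1 by simp
      finally show ?case using l1 by simp
    qed
  qed
  show "(\<lambda>b. real (Gf0 b)) \<in> \<Omega>[at_right 0](\<lambda>b. ln (1 / b))"
    unfolding bigomega_iff_bigo
  proof (rule bigoI[where c = 1])
    show "eventually (\<lambda>b. norm (ln (1 / b)) \<le> 1 * norm (real (Gf0 b))) (at_right 0)"
      using ev
    proof eventually_elim
      case (elim b)
      have b1: "b < 1" using elim by (meson exp_less_one_iff less_trans neg_less_0_iff_less zero_less_one)
      have "ln (1 / b) > 0" using elim b1 by simp
      thus ?case using Gf0_ge[of b] elim b1 by simp
    qed
  qed
qed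




lemma good_prob:
  assumes "0 < G" "even d" "0 < d" "(\<Sum>j<d. x j) = 0"
  shows "measure_pmf.prob (public_rand d G) {S. \<exists>g<G. (\<Sum>j<d. x j * sgs (S g) j)^2 \<ge> (\<Sum>j<d. (x j)^2) / 2}
         \<ge> 1 - (123/124) ^ G"
proof -
  define H where "H = halfsets d"
  define GS where "GS = {A. (\<Sum>j<d. x j * sgs A j)^2 \<ge> (\<Sum>j<d. (x j)^2) / 2}"
  have fH: "finite H" "H \<noteq> {}" unfolding H_def using finite_halfsets halfsets_ne by blast+
  have R: "public_rand d G = Pi_pmf {..<G} {} (\<lambda>_. pmf_of_set H)"
    unfolding public_rand_def H_def halfsets_def ..
  have cH: "card H > 0" using fH by (simp add: card_gt_0_iff)
  have pG: "measure_pmf.prob (pmf_of_set H) GS \<ge> 1 / 124"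
  proof -
    have "H \<inter> GS = {A \<in> halfsets d. (\<Sum>j<d. x j * sgs A j)^2 \<ge> (\<Sum>j<d. (x j)^2) / 2}"
      unfolding H_def GS_def by auto
    hence "real (card (H \<inter> GS)) * 124 \<ge> real (card H)"
      using anticonc[OF assms(2,3,4)] unfolding H_def by simp
    thus ?thesis using fH cH by (simp add: measure_pmf_of_set field_simps)
  qed
  have pB: "measure_pmf.prob (pmf_of_set H) (- GS) \<le> 123 / 124"
    using pG measure_pmf.prob_compl[of GS "pmf_of_set H"] by (simp add: Compl_eq_Diff_UNIV)
  have "{S. \<not> (\<exists>g<G. (\<Sum>j<d. x j * sgs (S g) j)^2 \<ge> (\<Sum>j<d. (x j)^2) / 2)} = Pi {..<G} (\<lambda>_. - GS)"
    unfolding GS_def Pi_def by auto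
  hence "measure_pmf.prob (public_rand d G) {S. \<not> (\<exists>g<G. (\<Sum>j<d. x j * sgs (S g) j)^2 \<ge> (\<Sum>j<d. (x j)^2) / 2)}
      = (\<Prod>g<G. measure_pmf.prob (pmf_of_set H) (- GS))"
    unfolding R by (simp add: measure_Pi_pmf_Pi)
  also have "\<dots> = measure_pmf.prob (pmf_of_set H) (- GS) ^ G" by simp
  also have "\<dots> \<le> (123/124) ^ G" by (intro power_mono pB) simp
  finally have "measure_pmf.prob (public_rand d G) {S. \<not> (\<exists>g<G. (\<Sum>j<d. x j * sgs (S g) j)^2 \<ge> (\<Sum>j<d. (x j)^2) / 2)}
      \<le> (123/124) ^ G" .
  moreover have "measure_pmf.prob (public_rand d G) {S. \<not> (\<exists>g<G. (\<Sum>j<d. x j * sgs (S g) j)^2 \<ge> (\<Sum>j<d. (x j)^2) / 2)}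
      = 1 - measure_pmf.prob (public_rand d G) {S. \<exists>g<G. (\<Sum>j<d. x j * sgs (S g) j)^2 \<ge> (\<Sum>j<d. (x j)^2) / 2}"
  proof -
    have eqc: "{S. \<not> (\<exists>g<G. (\<Sum>j<d. x j * sgs (S g) j)^2 \<ge> (\<Sum>j<d. (x j)^2) / 2)}
       = space (measure_pmf (public_rand d G)) - {S. \<exists>g<G. (\<Sum>j<d. x j * sgs (S g) j)^2 \<ge> (\<Sum>j<d. (x j)^2) / 2}"
      by auto
    show ?thesis unfolding eqc by (rule measure_pmf.prob_compl) simp
  qed
  ultimately show ?thesis by simp
qed


lemma thresh:
  fixes \<delta> :: "nat \<Rightarrow> real"
  assumes b0: "0 < \<beta>" and b1: "\<beta> < 1" and G2: "real G \<ge> 2" and n0: "0 < n" and eps: "0 < \<epsilon>" and d0: "0 < d"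
    and l1: "(\<Sum>j<d. \<bar>\<delta> j\<bar>) \<ge> 20 * rr_scale \<epsilon> *
            (sqrt (real d * real G / real n * ln (real G / \<beta>)) + real m * real G * sqrt (real d) / real n)"
    and good: "(\<Sum>j<d. \<delta> j * sgs A j)^2 \<ge> (\<Sum>j<d. (\<delta> j)^2) / 2"
  shows "\<bar>\<Sum>j<d. \<delta> j * sgs A j\<bar> \<ge> 3 * aa n G \<epsilon> \<beta> + 3 * (2 * rr_scale \<epsilon> * real m * (real G / real n))"
proof -
  define t where "t = real G / real n"
  define LG where "LG = ln (real G / \<beta>)"
  define L4 where "L4 = ln (4 * real G / \<beta>)"
  define rr where "rr = rr_scale \<epsilon>"
  define q where "q = sqrt (t * LG)"
  define p where "p = real m * t"
  define Y where "Y = (\<Sum>j<d. \<delta> j * sgs A j)"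
  define s2 where "s2 = (\<Sum>j<d. (\<delta> j)^2)"
  define l where "l = (\<Sum>j<d. \<bar>\<delta> j\<bar>)"
  have t0: "t > 0" unfolding t_def using G2 n0 by simp
  have LG0: "LG \<ge> 0" unfolding LG_def using G2 b0 b1 by (simp add: field_simps)
  have rr0: "rr > 0" unfolding rr_def using rr_pos eps by blast
  have q0: "q \<ge> 0" unfolding q_def using t0 LG0 by simp
  have p0: "p \<ge> 0" unfolding p_def using t0 by simp
  have L4le: "L4 \<le> 3 * LG" unfolding L4_def LG_def by (rule L4_le[OF b0 b1 G2])
  have e1: "sqrt (real d * real G / real n * ln (real G / \<beta>)) = sqrt (real d) * q"
    unfolding q_def t_def LG_def by (simp add: real_sqrt_mult[symmetric] mult_ac)
  have e2: "real m * real G * sqrt (real d) / real n = sqrt (real d) * p"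
    unfolding p_def t_def by simp
  define W where "W = 20 * rr * sqrt (real d) * (q + p)"
  have W0: "W \<ge> 0" unfolding W_def using rr0 q0 p0 by simp
  have lW: "l \<ge> W" using l1 unfolding l_def W_def e1 e2 rr_def by (simp add: algebra_simps)
  have cs: "l^2 \<le> real d * s2" unfolding l_def s2_def using CS_sum[of "\<lambda>j. \<bar>\<delta> j\<bar>" d] by simp
  have "W^2 \<le> l^2" using lW W0 by (intro power_mono) auto
  also have "\<dots> \<le> real d * s2" by (rule cs)
  also have "\<dots> \<le> real d * (2 * Y^2)" using good d0 unfolding Y_def s2_def by simp
  finally have WY: "W^2 \<le> real d * (2 * Y^2)" .
  have "W^2 = real d * (400 * rr^2 * (q + p)^2)" unfolding W_def using d0 by (simp add: power_mult_distrib)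
  hence Y2: "200 * rr^2 * (q + p)^2 \<le> Y^2" using WY d0 by simp
  have "6 * t * L4 \<le> (169 / 9) * (t * LG)" using L4le t0 LG0 by (simp add: mult_left_mono)
  hence "sqrt (6 * t * L4) \<le> sqrt ((169 / 9) * (t * LG))" by (rule real_sqrt_le_mono)
  also have "\<dots> = 13 / 3 * q" unfolding q_def by (simp add: real_sqrt_mult real_sqrt_divide)
  finally have sq: "sqrt (6 * t * L4) \<le> 13 / 3 * q" .
  define T where "T = 3 * aa n G \<epsilon> \<beta> + 3 * (2 * rr_scale \<epsilon> * real m * (real G / real n))"
  have Teq: "T = 3 * (rr * sqrt (6 * t * L4)) + 6 * rr * p"
    unfolding T_def aa_def rr_def t_def L4_def p_def by (simp add: algebra_simps)
  have aa0: "aa n G \<epsilon> \<beta> \<ge> 0" by (rule aa_nonneg) (use eps G2 b0 b1 in auto)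
  have T0: "T \<ge> 0" unfolding T_def using aa0 rr_pos[OF eps] t0 unfolding t_def by simp
  have "T \<le> 3 * (rr * (13 / 3 * q)) + 6 * rr * p" unfolding Teq using sq rr0 by simp
  also have "\<dots> \<le> 13 * rr * (q + p)" using rr0 p0 by (simp add: algebra_simps)
  finally have T13: "T \<le> 13 * rr * (q + p)" .
  have "T^2 \<le> (13 * rr * (q + p))^2" using T13 T0 by (intro power_mono) auto
  also have "\<dots> = 169 * rr^2 * (q + p)^2" by (simp add: power_mult_distrib)
  also have "\<dots> \<le> 200 * rr^2 * (q + p)^2" by simp
  also have "\<dots> \<le> Y^2" by (rule Y2)
  finally have "T^2 \<le> Y^2" .
  hence "\<bar>T\<bar> \<le> \<bar>Y\<bar>" by (simp add: abs_le_square_iff)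
  thus ?thesis using T0 unfolding T_def Y_def by simp
qed




lemma unif_facts:
  assumes "0 < d"
  shows "set_pmf (uniform_dist d) \<subseteq> {..<d}" "\<And>j. j < d \<Longrightarrow> pmf (uniform_dist d) j = 1 / real d"
proof -
  have ne: "{..<d} \<noteq> {}" using assms by auto
  show "set_pmf (uniform_dist d) \<subseteq> {..<d}" unfolding uniform_dist_def using ne by simp
  fix j assume "j < d"
  thus "pmf (uniform_dist d) j = 1 / real d" unfolding uniform_dist_def using ne by simp
qed

lemma part_unif:
  assumes G0: "0 < G" and Gdvd: "G dvd n" and n0: "0 < n" and eps: "0 < \<epsilon>"
    and b0: "0 < \<beta>" and b1: "\<beta> < 1" and ev: "even d" and d0: "0 < d"
    and valid: "valid_attacker n m \<epsilon> M"
  shows "measure_pmf.prob (manip m n G \<epsilon> \<beta> d (uniform_dist d) M) {Uniform} \<ge> 1 - \<beta>"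
proof -
  define U where "U = uniform_dist d"
  have Us: "set_pmf U \<subseteq> {..<d}" unfolding U_def using unif_facts[OF d0] by blast
  have Y0: "Yd U d A = 0" for A
    unfolding Yd_def U_def by (intro sum.neutral) (simp add: unif_facts[OF d0])
  have lb: "emeasure (measure_pmf (manip m n G \<epsilon> \<beta> d U M)) {Uniform} \<ge>
     (\<integral>\<^sup>+S. emeasure (measure_pmf (Pi_pmf {..<n} 0 (\<lambda>i. bind_pmf U (\<lambda>x. raptor_client n G \<epsilon> S i x)))) {yh. Conc n G \<epsilon> \<beta> U d S yh}
       \<partial>measure_pmf (public_rand d G))"
  proof (rule manip_lb[OF valid])
    fix S yh C ya
    assume "\<forall>i<n. yh i \<in> {rr_scale \<epsilon>, - rr_scale \<epsilon>}" "Conc n G \<epsilon> \<beta> U d S yh" "C \<subseteq> {..<n}" "card C = m"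
      "\<forall>i\<in>C. ya i \<in> {rr_scale \<epsilon>, - rr_scale \<epsilon>}"
    thus "raptor_aggregate n G \<epsilon> m \<beta> (\<lambda>i. if i \<in> C then ya i else yh i) = Uniform"
      using agg_unif[OF G0 Gdvd n0 eps b0 b1] Y0 by blast
  next
    fix S i x show "set_pmf (raptor_client n G \<epsilon> S i x) \<subseteq> {rr_scale \<epsilon>, - rr_scale \<epsilon>}" by (rule client_supp)
  qed
  have mono: "(\<integral>\<^sup>+S. emeasure (measure_pmf (Pi_pmf {..<n} 0 (\<lambda>i. bind_pmf U (\<lambda>x. raptor_client n G \<epsilon> S i x)))) {yh. Conc n G \<epsilon> \<beta> U d S yh}
       \<partial>measure_pmf (public_rand d G)) \<ge> (\<integral>\<^sup>+S. ennreal (1 - \<beta> / 2) \<partial>measure_pmf (public_rand d G))"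
  proof (intro nn_integral_mono_AE AE_pmfI)
    fix S assume S: "S \<in> set_pmf (public_rand d G)"
    have "measure_pmf.prob (Dh n G \<epsilon> U S) {yh. Conc n G \<epsilon> \<beta> U d S yh} \<ge> 1 - \<beta> / 2"
      by (rule conc_prob[OF G0 Gdvd n0 eps b0 b1 ev d0 Us S])
    thus "ennreal (1 - \<beta> / 2) \<le> emeasure (measure_pmf (Pi_pmf {..<n} 0 (\<lambda>i. bind_pmf U (\<lambda>x. raptor_client n G \<epsilon> S i x)))) {yh. Conc n G \<epsilon> \<beta> U d S yh}"
      unfolding Dh_def by (simp add: measure_pmf.emeasure_eq_measure)
  qed
  have c: "(\<integral>\<^sup>+S. ennreal (1 - \<beta> / 2) \<partial>measure_pmf (public_rand d G)) = ennreal (1 - \<beta> / 2)"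
    by (simp add: measure_pmf.emeasure_space_1)
  have "ennreal (1 - \<beta> / 2) \<le> emeasure (measure_pmf (manip m n G \<epsilon> \<beta> d U M)) {Uniform}"
    using order_trans[OF mono lb] c by simp
  hence "ennreal (1 - \<beta> / 2) \<le> ennreal (measure_pmf.prob (manip m n G \<epsilon> \<beta> d U M) {Uniform})"
    by (simp add: measure_pmf.emeasure_eq_measure)
  hence "1 - \<beta> / 2 \<le> measure_pmf.prob (manip m n G \<epsilon> \<beta> d U M) {Uniform}"
    by (simp add: ennreal_le_iff)
  thus ?thesis unfolding U_def using b0 by simp
qed


lemma part_notunif:
  assumes G2: "real G \<ge> 2" and Gdvd: "G dvd n" and n0: "0 < n" and eps: "0 < \<epsilon>"
    and b0: "0 < \<beta>" and b1: "\<beta> < 1" and ev: "even d" and d0: "0 < d"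
    and valid: "valid_attacker n m \<epsilon> M" and Ps: "set_pmf P \<subseteq> {..<d}"
    and l1: "l1_to_uniform d P \<ge> 20 * rr_scale \<epsilon> *
            (sqrt (real d * real G / real n * ln (real G / \<beta>)) + real m * real G * sqrt (real d) / real n)"
    and powb: "(123 / 124 :: real) ^ G \<le> \<beta> / 2"
  shows "measure_pmf.prob (manip m n G \<epsilon> \<beta> d P M) {NotUniform} \<ge> 1 - \<beta>"
proof -
  have G0: "0 < G" using G2 by simp
  define \<delta> where "\<delta> j = pmf P j - 1 / real d" for j
  have sd: "(\<Sum>j<d. \<delta> j) = 0"
  proof -
    have "(\<Sum>j<d. pmf P j) = 1" by (rule sum_pmf_eq_1) (use Ps in auto)
    thus ?thesis unfolding \<delta>_def using d0 by (simp add: sum_subtractf)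
  qed
  have l1d: "l1_to_uniform d P = (\<Sum>j<d. \<bar>\<delta> j\<bar>)"
    unfolding l1_to_uniform_def \<delta>_def by (intro sum.cong refl) (simp add: unif_facts[OF d0])
  have YdA: "Yd P d A = (\<Sum>j<d. \<delta> j * sgs A j)" for A unfolding Yd_def \<delta>_def ..
  define Good where "Good S \<longleftrightarrow> (\<exists>g<G. (\<Sum>j<d. \<delta> j * sgs (S g) j)^2 \<ge> (\<Sum>j<d. (\<delta> j)^2) / 2)" for S
  have lb: "emeasure (measure_pmf (manip m n G \<epsilon> \<beta> d P M)) {NotUniform} \<ge>
     (\<integral>\<^sup>+S. emeasure (measure_pmf (Pi_pmf {..<n} 0 (\<lambda>i. bind_pmf P (\<lambda>x. raptor_client n G \<epsilon> S i x)))) {yh. Good S \<and> Conc n G \<epsilon> \<beta> P d S yh}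
       \<partial>measure_pmf (public_rand d G))"
  proof (rule manip_lb[OF valid])
    fix S yh C ya
    assume yh: "\<forall>i<n. yh i \<in> {rr_scale \<epsilon>, - rr_scale \<epsilon>}" and Q: "Good S \<and> Conc n G \<epsilon> \<beta> P d S yh"
      and C: "C \<subseteq> {..<n}" "card C = m" "\<forall>i\<in>C. ya i \<in> {rr_scale \<epsilon>, - rr_scale \<epsilon>}"
    obtain g where g: "g < G" "(\<Sum>j<d. \<delta> j * sgs (S g) j)^2 \<ge> (\<Sum>j<d. (\<delta> j)^2) / 2"
      using Q unfolding Good_def by blast
    have big: "\<bar>Yd P d (S g)\<bar> \<ge> 3 * aa n G \<epsilon> \<beta> + 3 * (2 * rr_scale \<epsilon> * real m * (real G / real n))"
    proof -
      have l1': "(\<Sum>j<d. \<bar>\<delta> j\<bar>) \<ge> 20 * rr_scale \<epsilon> *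
            (sqrt (real d * real G / real n * ln (real G / \<beta>)) + real m * real G * sqrt (real d) / real n)"
        using l1 l1d by simp
      show ?thesis unfolding YdA by (rule thresh[OF b0 b1 G2 n0 eps d0 l1' g(2)])
    qed
    show "raptor_aggregate n G \<epsilon> m \<beta> (\<lambda>i. if i \<in> C then ya i else yh i) = NotUniform"
    proof -
      have conc: "Conc n G \<epsilon> \<beta> P d S yh" using Q by blast
      show ?thesis by (rule agg_notunif[OF G0 Gdvd n0 eps b0 b1 C yh conc g(1) big])
    qed
  next
    fix S i x show "set_pmf (raptor_client n G \<epsilon> S i x) \<subseteq> {rr_scale \<epsilon>, - rr_scale \<epsilon>}" by (rule client_supp)
  qed
  have mono: "(\<integral>\<^sup>+S. ennreal (1 - \<beta> / 2) * indicator {S. Good S} S \<partial>measure_pmf (public_rand d G)) \<le>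
     (\<integral>\<^sup>+S. emeasure (measure_pmf (Pi_pmf {..<n} 0 (\<lambda>i. bind_pmf P (\<lambda>x. raptor_client n G \<epsilon> S i x)))) {yh. Good S \<and> Conc n G \<epsilon> \<beta> P d S yh}
       \<partial>measure_pmf (public_rand d G))"
  proof (intro nn_integral_mono_AE AE_pmfI)
    fix S assume S: "S \<in> set_pmf (public_rand d G)"
    show "ennreal (1 - \<beta> / 2) * indicator {S. Good S} S \<le> emeasure (measure_pmf (Pi_pmf {..<n} 0 (\<lambda>i. bind_pmf P (\<lambda>x. raptor_client n G \<epsilon> S i x)))) {yh. Good S \<and> Conc n G \<epsilon> \<beta> P d S yh}"
    proof (cases "Good S")
      case True
      have "measure_pmf.prob (Dh n G \<epsilon> P S) {yh. Conc n G \<epsilon> \<beta> P d S yh} \<ge> 1 - \<beta> / 2"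
        by (rule conc_prob[OF G0 Gdvd n0 eps b0 b1 ev d0 Ps S])
      thus ?thesis using True unfolding Dh_def by (simp add: measure_pmf.emeasure_eq_measure)
    qed simp
  qed
  have c: "(\<integral>\<^sup>+S. ennreal (1 - \<beta> / 2) * indicator {S. Good S} S \<partial>measure_pmf (public_rand d G))
      = ennreal (1 - \<beta> / 2) * ennreal (measure_pmf.prob (public_rand d G) {S. Good S})"
    by (simp add: nn_integral_cmult_indicator measure_pmf.emeasure_eq_measure)
  have pg: "measure_pmf.prob (public_rand d G) {S. Good S} \<ge> 1 - \<beta> / 2"
  proof -
    have "measure_pmf.prob (public_rand d G) {S. Good S} \<ge> 1 - (123/124) ^ G"
      unfolding Good_def by (rule good_prob[OF G0 ev d0 sd])
    thus ?thesis using powb by simp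
  qed
  have "ennreal ((1 - \<beta> / 2) * (1 - \<beta> / 2)) \<le> ennreal ((1 - \<beta> / 2) * measure_pmf.prob (public_rand d G) {S. Good S})"
    using pg b0 b1 by (intro ennreal_leI mult_left_mono) auto
  also have "\<dots> = ennreal (1 - \<beta> / 2) * ennreal (measure_pmf.prob (public_rand d G) {S. Good S})"
    using b1 by (simp add: ennreal_mult)
  finally have "ennreal ((1 - \<beta> / 2) * (1 - \<beta> / 2)) \<le> emeasure (measure_pmf (manip m n G \<epsilon> \<beta> d P M)) {NotUniform}"
    using order_trans[OF mono lb] c by simp
  hence "(1 - \<beta> / 2) * (1 - \<beta> / 2) \<le> measure_pmf.prob (manip m n G \<epsilon> \<beta> d P M) {NotUniform}"
    by (simp add: measure_pmf.emeasure_eq_measure ennreal_le_iff)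
  moreover have "1 - \<beta> \<le> (1 - \<beta> / 2) * (1 - \<beta> / 2)" by (simp add: algebra_simps)
  ultimately show ?thesis by linarith
qed

theorem mainTheorem16:
  shows "\<exists>c::real. \<exists>Gf :: real \<Rightarrow> nat.
    (\<lambda>b. real (Gf b)) \<in> \<Theta>[at_right 0](\<lambda>b. ln (1 / b)) \<and>
    (\<forall>\<beta> \<epsilon> m n d M.
       0 < \<beta> \<and> \<beta> < 1 \<and> 0 < \<epsilon> \<and> 1 \<le> m \<and> m \<le> n \<and> Gf \<beta> dvd n \<and>
       even d \<and> 0 < d \<and> valid_attacker n m \<epsilon> M \<longrightarrow>
       measure_pmf.prob (manip m n (Gf \<beta>) \<epsilon> \<beta> d (uniform_dist d) M) {Uniform} \<ge> 1 - \<beta> \<and>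
       (\<forall>P :: nat pmf. set_pmf P \<subseteq> {..<d} \<and>
          l1_to_uniform d P \<ge> c * rr_scale \<epsilon> *
            (sqrt (real d * real (Gf \<beta>) / real n * ln (real (Gf \<beta>) / \<beta>))
             + real m * real (Gf \<beta>) * sqrt (real d) / real n) \<longrightarrow>
          measure_pmf.prob (manip m n (Gf \<beta>) \<epsilon> \<beta> d P M) {NotUniform} \<ge> 1 - \<beta>))"
proof (intro exI conjI allI impI)
  show "(\<lambda>b. real (Gf0 b)) \<in> \<Theta>[at_right 0](\<lambda>b. ln (1 / b))" by (rule Gf0_theta)
next
  fix \<beta> \<epsilon> :: real and m n d :: nat and M :: attacker
  assume A: "0 < \<beta> \<and> \<beta> < 1 \<and> 0 < \<epsilon> \<and> 1 \<le> m \<and> m \<le> n \<and> Gf0 \<beta> dvd n \<and>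
       even d \<and> 0 < d \<and> valid_attacker n m \<epsilon> M"
  have G2: "Gf0 \<beta> \<ge> 2" using Gf0_ge A by blast
  have n0: "0 < n" using A by simp
  show "measure_pmf.prob (manip m n (Gf0 \<beta>) \<epsilon> \<beta> d (uniform_dist d) M) {Uniform} \<ge> 1 - \<beta>"
    by (rule part_unif) (use A G2 n0 in auto)
  fix P :: "nat pmf"
  assume B: "set_pmf P \<subseteq> {..<d} \<and>
          l1_to_uniform d P \<ge> 20 * rr_scale \<epsilon> *
            (sqrt (real d * real (Gf0 \<beta>) / real n * ln (real (Gf0 \<beta>) / \<beta>))
             + real m * real (Gf0 \<beta>) * sqrt (real d) / real n)"
  have powb: "(123 / 124 :: real) ^ Gf0 \<beta> \<le> \<beta> / 2" using pow_bound A by blast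
  show "measure_pmf.prob (manip m n (Gf0 \<beta>) \<epsilon> \<beta> d P M) {NotUniform} \<ge> 1 - \<beta>"
    by (rule part_notunif[OF _ _ n0 _ _ _ _ _ _ _ _ powb]) (use A B G2 in auto)
qed


end
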